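(* Let $s\in\{0,\tfrac12\}$ and $\lambda\in\mathbb{C}$, and let $\mathfrak{L}=\mathfrak{L}^s_\lambda$. Then the space of all superderivations of $\mathfrak{L}$ decomposes as $$\mathrm{Der}(\mathfrak{L})=\mathrm{Inn}(\mathfrak{L})\oplus\mathbb{C}\,\partial_G\oplus\delta_{\lambda,0}\,\mathbb{C}\,\partial_D ,$$ where $\delta_{\lambda,0}\mathbb{C}\partial_D$ denotes $\mathbb{C}\partial_D$ if $\lambda=0$ and $\{0\}$ if $\lambda\neq0$. (In the paper, $\partial_G$ is called $\partial_2$ for $s=0$ and $\partial_4$ for $s=\tfrac12$; $\partial_D$ is called $\partial_1$ for $s=0$ and $\partial_3$ for $s=\tfrac12$.)
   Context: Fix $s\in\{0,\tfrac12\}$ and $\lambda\in\mathbb{C}$. The deformative super $W$-algebra $\mathfrak{L}=\mathfrak{L}^s_\lambda=W^s_\lambda(2,2)$ is the complex Lie superalgebra with basis $\{L_m,I_m,G_p,H_p : m\in\mathbb{Z},\ p\in s+\mathbb{Z}\}$, even part $\mathfrak{L}_{\bar0}=\mathrm{span}\{L_m,I_m\}$, odd part $\mathfrak{L}_{\bar1}=\mathrm{span}\{G_p,H_p\}$, and brackets of basis elements given by $[L_m,L_n]=(m-n)L_{m+n}$, $[L_m,I_n]=(m-n)I_{m+n}$, $[L_m,H_p]=(\tfrac m2-p)H_{m+p}$, $[L_m,G_p]=(\tfrac m2-p)G_{m+p}+\lambda(m+1)H_{m+p}$, $[I_m,G_p]=(m-2p)H_{m+p}$, $[G_p,G_q]=I_{p+q}$,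 together with those obtained by super-antisymmetry $[y,x]=-(-1)^{|x||y|}[x,y]$; all other brackets of basis elements vanish (e.g. $[I_m,I_n]=[I_m,H_p]=[G_p,H_q]=[H_p,H_q]=0$). For homogeneous $x$, $|x|\in\mathbb{Z}_2$ denotes its parity. A superderivation of parity $a\in\mathbb{Z}_2$ is a linear map $D:\mathfrak{L}\to\mathfrak{L}$ with $D(\mathfrak{L}_{b})\subset\mathfrak{L}_{a+b}$ and $D([x,y])=[D(x),y]+(-1)^{a|x|}[x,D(y)]$ for homogeneous $x,y$; $\mathrm{Der}(\mathfrak{L})=\mathrm{Der}_{\bar0}(\mathfrak{L})\oplus\mathrm{Der}_{\bar1}(\mathfrak{L})$ is the space of sums of an even and an odd superderivation. $\mathrm{Inn}(\mathfrak{L})=\{\mathrm{ad}\,x: x\in\mathfrak{L}\}$, where $\mathrm{ad}\,x(y)=[x,y]$ (extended linearly from homogeneous $x$). The linear maps $\partial_G$ and $\partial_D$ are defined by: $\partial_G(L_m)=\partial_G(I_m)=\partial_G(H_p)=0$, $\partial_G(G_p)=H_p$; and $\partial_D(L_m)=0$, $\partial_D(I_m)=2I_m$, $\partial_D(G_p)=G_p$, $\partial_D(H_p)=3H_p$ (for all $m\in\mathbb{Z}$, $p\in s+\mathbb{Z}$). *)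

theory Defs
  imports Complex_Main "HOL-Library.Function_Algebras"
begin

text \<open>Basis of the deformative super W-algebra W^s_lambda(2,2).
  L m, I m (m integer) are even; G k, H k stand for G_p, H_p with p = k + s.\<close>
datatype bas = L int | I int | G int | H int

fun par :: "bas \<Rightarrow> bool" where
  "par (L _) = False" | "par (I _) = False" | "par (G _) = True" | "par (H _) = True"

type_synonym vec = "bas \<Rightarrow> complex"

definition supp :: "vec \<Rightarrow> bas set" where "supp v = {b. v b \<noteq> 0}"

definition V :: "vec set" where "V = {v. finite (supp v)}"

definition bv :: "bas \<Rightarrow> vec" where "bv b = (\<lambda>c. if c = b then 1 else 0)"

definition smul :: "complex \<Rightarrow> vec \<Rightarrow> vec" where "smul a v = (\<lambda>b. a * v b)"

definition pv :: "real \<Rightarrow> int \<Rightarrow> complex" where "pv s k = of_int k + complex_of_real s"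
definition tws :: "real \<Rightarrow> int" where "tws s = \<lfloor>2 * s\<rfloor>"

fun br :: "real \<Rightarrow> complex \<Rightarrow> bas \<Rightarrow> bas \<Rightarrow> vec" where
  "br s la (L m) (L n) = smul (of_int (m - n)) (bv (L (m + n)))"
| "br s la (L m) (I n) = smul (of_int (m - n)) (bv (I (m + n)))"
| "br s la (I n) (L m) = smul (- of_int (m - n)) (bv (I (m + n)))"
| "br s la (L m) (H k) = smul (of_int m / 2 - pv s k) (bv (H (m + k)))"
| "br s la (H k) (L m) = smul (- (of_int m / 2 - pv s k)) (bv (H (m + k)))"
| "br s la (L m) (G k) = smul (of_int m / 2 - pv s k) (bv (G (m + k)))
                         + smul (la * (of_int m + 1)) (bv (H (m + k)))"
| "br s la (G k) (L m) = smul (- (of_int m / 2 - pv s k)) (bv (G (m + k)))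
                         + smul (- (la * (of_int m + 1))) (bv (H (m + k)))"
| "br s la (I m) (G k) = smul (of_int m - 2 * pv s k) (bv (H (m + k)))"
| "br s la (G k) (I m) = smul (- (of_int m - 2 * pv s k)) (bv (H (m + k)))"
| "br s la (G k) (G l) = bv (I (k + l + tws s))"
| "br s la _ _ = 0"

definition brk :: "real \<Rightarrow> complex \<Rightarrow> vec \<Rightarrow> vec \<Rightarrow> vec" where
  "brk s la x y = (\<lambda>c. \<Sum>b1\<in>supp x. \<Sum>b2\<in>supp y. x b1 * y b2 * br s la b1 b2 c)"

definition hom :: "bool \<Rightarrow> vec \<Rightarrow> bool" where
  "hom p x \<longleftrightarrow> x \<in> V \<and> (\<forall>b. x b \<noteq> 0 \<longrightarrow> par b = p)"

definition superder :: "real \<Rightarrow> complex \<Rightarrow> bool \<Rightarrow> (vec \<Rightarrow> vec) \<Rightarrow> bool" where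
  "superder s la a D \<longleftrightarrow>
     (\<forall>x\<in>V. \<forall>y\<in>V. D (x + y) = D x + D y) \<and>
     (\<forall>c. \<forall>x\<in>V. D (smul c x) = smul c (D x)) \<and>
     (\<forall>p x. hom p x \<longrightarrow> hom (a \<noteq> p) (D x)) \<and>
     (\<forall>p q x y. hom p x \<longrightarrow> hom q y \<longrightarrow>
        D (brk s la x y) = brk s la (D x) y + smul (if a \<and> p then -1 else 1) (brk s la x (D y)))"

definition is_der :: "real \<Rightarrow> complex \<Rightarrow> (vec \<Rightarrow> vec) \<Rightarrow> bool" where
  "is_der s la D \<longleftrightarrow> (\<exists>D0 D1. superder s la False D0 \<and> superder s la True D1 \<and>
                          (\<forall>v\<in>V. D v = D0 v + D1 v))"

definition ad :: "real \<Rightarrow> complex \<Rightarrow> vec \<Rightarrow> vec \<Rightarrow> vec" where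
  "ad s la x = brk s la x"

definition dG :: "vec \<Rightarrow> vec" where
  "dG v = (\<lambda>b. case b of H k \<Rightarrow> v (G k) | _ \<Rightarrow> 0)"

definition dD :: "vec \<Rightarrow> vec" where
  "dD v = (\<lambda>b. case b of L m \<Rightarrow> 0 | I m \<Rightarrow> 2 * v b | G k \<Rightarrow> v b | H k \<Rightarrow> 3 * v b)"

end

theory Submission
  imports Defs
begin


declare plus_fun_apply[simp del] zero_fun_apply[simp del] minus_apply[simp del] uminus_apply[simp del]

lemma sum_fun_apply: "(sum f A) c = sum (\<lambda>a. f a c) A"
  by (induction A rule: infinite_finite_induct) (auto simp: plus_fun_apply zero_fun_apply)

lemma smul_apply: "smul a v c = a * v c" by (simp add: smul_def)
lemma bv_apply: "bv b c = (if c = b then 1 else 0)" by (simp add: bv_def)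

lemmas pw = smul_apply plus_fun_apply zero_fun_apply minus_apply uminus_apply

lemma in_V: "x \<in> V \<longleftrightarrow> finite {b. x b \<noteq> 0}" by (simp add: V_def supp_def)
lemma in_supp[simp]: "b \<in> supp x \<longleftrightarrow> x b \<noteq> 0" by (simp add: supp_def)

lemma zero_V[simp]: "0 \<in> V" by (simp add: in_V pw)
lemma bv_V[simp]: "bv b \<in> V" by (simp add: in_V bv_def)
lemma add_V[simp]: "x \<in> V \<Longrightarrow> y \<in> V \<Longrightarrow> x + y \<in> V"
  unfolding in_V by (rule finite_subset[of _ "{b. x b \<noteq> 0} \<union> {b. y b \<noteq> 0}"]) (auto simp: pw)
lemma smul_V[simp]: "x \<in> V \<Longrightarrow> smul a x \<in> V"
  unfolding in_V by (rule finite_subset[of _ "{b. x b \<noteq> 0}"]) (auto simp: smul_apply)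
lemma uminus_V[simp]: "x \<in> V \<Longrightarrow> - x \<in> V"
  unfolding in_V by (simp add: pw)
lemma minus_V[simp]: "x \<in> V \<Longrightarrow> y \<in> V \<Longrightarrow> x - y \<in> V"
  unfolding in_V by (rule finite_subset[of _ "{b. x b \<noteq> 0} \<union> {b. y b \<noteq> 0}"]) (auto simp: pw)
lemma sum_V[simp]: "(\<And>a. a \<in> A \<Longrightarrow> f a \<in> V) \<Longrightarrow> sum f A \<in> V"
  by (induction A rule: infinite_finite_induct) auto
lemma finite_supp: "x \<in> V \<Longrightarrow> finite (supp x)" by (simp add: V_def)

lemma smul_add: "smul a (x + y) = smul a x + smul a y" by (rule ext) (simp add: pw algebra_simps)
lemma smul_smul[simp]: "smul a (smul b x) = smul (a * b) x" by (rule ext) (simp add: pw)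
lemma smul_zero[simp]: "smul a 0 = 0" by (rule ext) (simp add: pw)
lemma smul_zero2[simp]: "smul 0 x = 0" by (rule ext) (simp add: pw)
lemma smul_one[simp]: "smul 1 x = x" by (rule ext) (simp add: pw)
lemma smul_sum: "smul a (sum f A) = (\<Sum>i\<in>A. smul a (f i))"
  by (rule ext) (simp add: pw sum_fun_apply sum_distrib_left)

lemma rep: assumes "x \<in> V" shows "x = (\<Sum>b\<in>supp x. smul (x b) (bv b))"
proof (rule ext)
  fix c
  have "(\<Sum>b\<in>supp x. smul (x b) (bv b)) c = (\<Sum>b\<in>supp x. x b * (if c = b then 1 else 0))"
    by (simp add: smul_apply sum_fun_apply bv_apply)
  also have "\<dots> = x c" using finite_supp[OF assms]
    by (cases "x c = 0") (simp_all add: if_distrib cong: if_cong)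
  finally show "x c = (\<Sum>b\<in>supp x. smul (x b) (bv b)) c" by simp
qed

lemma br_V[simp]: "br s la a b \<in> V"
  by (cases a; cases b) simp_all

lemma brk_eq:
  assumes "finite A" "supp x \<subseteq> A" "finite B" "supp y \<subseteq> B"
  shows "brk s la x y c = (\<Sum>b1\<in>A. \<Sum>b2\<in>B. x b1 * y b2 * br s la b1 b2 c)"
proof -
  have "brk s la x y c = (\<Sum>b1\<in>supp x. \<Sum>b2\<in>B. x b1 * y b2 * br s la b1 b2 c)"
    unfolding brk_def
    by (rule sum.cong[OF refl], rule sum.mono_neutral_left) (use assms in auto)
  also have "\<dots> = (\<Sum>b1\<in>A. \<Sum>b2\<in>B. x b1 * y b2 * br s la b1 b2 c)"
    by (rule sum.mono_neutral_left) (use assms in auto)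
  finally show ?thesis .
qed

lemma brk_zero1[simp]: "brk s la 0 x = 0" by (rule ext) (simp add: brk_def supp_def pw)
lemma brk_zero2[simp]: "brk s la x 0 = 0" by (rule ext) (simp add: brk_def supp_def pw)

lemma brk_inf1: "x \<notin> V \<Longrightarrow> brk s la x y = 0"
  by (rule ext) (simp add: brk_def V_def zero_fun_apply)
lemma brk_inf2: "y \<notin> V \<Longrightarrow> brk s la x y = 0"
  by (rule ext) (simp add: brk_def V_def zero_fun_apply)

lemma brk_V[simp]: "brk s la x y \<in> V"
proof (cases "x \<in> V \<and> y \<in> V")
  case True
  have "brk s la x y = (\<Sum>b1\<in>supp x. \<Sum>b2\<in>supp y. smul (x b1 * y b2) (br s la b1 b2))"
    by (rule ext) (simp add: pw brk_def sum_fun_apply)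
  then show ?thesis by simp
next
  case False then show ?thesis using brk_inf1 brk_inf2 by auto
qed

lemma brk_expand: "brk s la x y = (\<Sum>b1\<in>supp x. \<Sum>b2\<in>supp y. smul (x b1 * y b2) (br s la b1 b2))"
  by (rule ext) (simp add: pw brk_def sum_fun_apply)

lemma brk_add_left: assumes "x \<in> V" "y \<in> V" shows "brk s la (x + y) z = brk s la x z + brk s la y z"
proof (cases "z \<in> V")
  case True
  let ?A = "supp x \<union> supp y"
  have fA: "finite ?A" using assms by (simp add: finite_supp)
  show ?thesis
  proof (rule ext)
    fix c
    have "brk s la (x+y) z c = (\<Sum>b1\<in>?A. \<Sum>b2\<in>supp z. (x+y) b1 * z b2 * br s la b1 b2 c)"
      by (rule brk_eq) (use fA True finite_supp in \<open>auto simp: pw\<close>)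
    moreover have "brk s la x z c = (\<Sum>b1\<in>?A. \<Sum>b2\<in>supp z. x b1 * z b2 * br s la b1 b2 c)"
      by (rule brk_eq) (use fA True finite_supp in \<open>auto simp: pw\<close>)
    moreover have "brk s la y z c = (\<Sum>b1\<in>?A. \<Sum>b2\<in>supp z. y b1 * z b2 * br s la b1 b2 c)"
      by (rule brk_eq) (use fA True finite_supp in \<open>auto simp: pw\<close>)
    ultimately show "brk s la (x + y) z c = (brk s la x z + brk s la y z) c"
      by (simp add: sum.distrib[symmetric] algebra_simps pw)
  qed
qed (simp add: brk_inf2)

lemma brk_add_right: assumes "x \<in> V" "y \<in> V" shows "brk s la z (x + y) = brk s la z x + brk s la z y"
proof (cases "z \<in> V")
  case True
  let ?A = "supp x \<union> supp y"
  have fA: "finite ?A" using assms by (simp add: finite_supp)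
  show ?thesis
  proof (rule ext)
    fix c
    have "brk s la z (x+y) c = (\<Sum>b1\<in>supp z. \<Sum>b2\<in>?A. z b1 * (x+y) b2 * br s la b1 b2 c)"
      by (rule brk_eq) (use fA True finite_supp in \<open>auto simp: pw\<close>)
    moreover have "brk s la z x c = (\<Sum>b1\<in>supp z. \<Sum>b2\<in>?A. z b1 * x b2 * br s la b1 b2 c)"
      by (rule brk_eq) (use fA True finite_supp in \<open>auto simp: pw\<close>)
    moreover have "brk s la z y c = (\<Sum>b1\<in>supp z. \<Sum>b2\<in>?A. z b1 * y b2 * br s la b1 b2 c)"
      by (rule brk_eq) (use fA True finite_supp in \<open>auto simp: pw\<close>)
    ultimately show "brk s la z (x + y) c = (brk s la z x + brk s la z y) c"
      by (simp add: sum.distrib[symmetric] algebra_simps pw)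
  qed
qed (simp add: brk_inf1)

lemma brk_smul_left: "brk s la (smul a x) z = smul a (brk s la x z)"
proof (cases "x \<in> V \<and> z \<in> V")
  case True
  show ?thesis
  proof (rule ext)
    fix c
    have "brk s la (smul a x) z c = (\<Sum>b1\<in>supp x. \<Sum>b2\<in>supp z. (smul a x) b1 * z b2 * br s la b1 b2 c)"
      by (rule brk_eq) (use True finite_supp in \<open>auto simp: smul_apply\<close>)
    moreover have "brk s la x z c = (\<Sum>b1\<in>supp x. \<Sum>b2\<in>supp z. x b1 * z b2 * br s la b1 b2 c)"
      by (rule brk_eq) (use True finite_supp in auto)
    ultimately show "brk s la (smul a x) z c = smul a (brk s la x z) c"
      by (simp add: smul_apply sum_distrib_left algebra_simps)
  qed
next
  case False
  then have "x \<notin> V \<or> z \<notin> V" by blast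
  then show ?thesis
  proof
    assume "x \<notin> V"
    then show ?thesis by (cases "a = 0") (auto simp: brk_inf1 in_V smul_apply)
  qed (simp add: brk_inf2)
qed

lemma brk_smul_right: "brk s la z (smul a x) = smul a (brk s la z x)"
proof (cases "x \<in> V \<and> z \<in> V")
  case True
  show ?thesis
  proof (rule ext)
    fix c
    have "brk s la z (smul a x) c = (\<Sum>b1\<in>supp z. \<Sum>b2\<in>supp x. z b1 * (smul a x) b2 * br s la b1 b2 c)"
      by (rule brk_eq) (use True finite_supp in \<open>auto simp: smul_apply\<close>)
    moreover have "brk s la z x c = (\<Sum>b1\<in>supp z. \<Sum>b2\<in>supp x. z b1 * x b2 * br s la b1 b2 c)"
      by (rule brk_eq) (use True finite_supp in auto)
    ultimately show "brk s la z (smul a x) c = smul a (brk s la z x) c"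
      by (simp add: smul_apply sum_distrib_left algebra_simps)
  qed
next
  case False
  then have "x \<notin> V \<or> z \<notin> V" by blast
  then show ?thesis
  proof
    assume "x \<notin> V"
    then show ?thesis by (cases "a = 0") (auto simp: brk_inf2 in_V smul_apply)
  qed (simp add: brk_inf1)
qed


lemma brk_bv_bv[simp]: "brk s la (bv a) (bv b) = br s la a b"
proof (rule ext)
  fix c
  have "brk s la (bv a) (bv b) c = (\<Sum>b1\<in>{a}. \<Sum>b2\<in>{b}. bv a b1 * bv b b2 * br s la b1 b2 c)"
    by (rule brk_eq) (auto simp: bv_apply split: if_splits)
  then show "brk s la (bv a) (bv b) c = br s la a b c" by (simp add: bv_apply)
qed

lemma brk_sum_left: "(\<And>a. a \<in> A \<Longrightarrow> f a \<in> V) \<Longrightarrow> brk s la (sum f A) z = (\<Sum>a\<in>A. brk s la (f a) z)"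
  by (induction A rule: infinite_finite_induct) (auto simp: brk_add_left)
lemma brk_sum_right: "(\<And>a. a \<in> A \<Longrightarrow> f a \<in> V) \<Longrightarrow> brk s la z (sum f A) = (\<Sum>a\<in>A. brk s la z (f a))"
  by (induction A rule: infinite_finite_induct) (auto simp: brk_add_right)

lemma brk_neg_left: "brk s la (- x) z = - brk s la x z"
proof -
  have "- x = smul (-1) x" by (rule ext) (simp add: pw)
  moreover have "- brk s la x z = smul (-1) (brk s la x z)" by (rule ext) (simp add: pw)
  ultimately show ?thesis by (simp add: brk_smul_left)
qed
lemma brk_neg_right: "brk s la z (- x) = - brk s la z x"
proof -
  have "- x = smul (-1) x" by (rule ext) (simp add: pw)
  moreover have "- brk s la z x = smul (-1) (brk s la z x)" by (rule ext) (simp add: pw)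
  ultimately show ?thesis by (simp add: brk_smul_right)
qed
lemma brk_diff_left: "x \<in> V \<Longrightarrow> y \<in> V \<Longrightarrow> brk s la (x - y) z = brk s la x z - brk s la y z"
  using brk_add_left[of x "-y"] by (simp add: brk_neg_left)
lemma brk_diff_right: "x \<in> V \<Longrightarrow> y \<in> V \<Longrightarrow> brk s la z (x - y) = brk s la z x - brk s la z y"
  using brk_add_right[of x "-y"] by (simp add: brk_neg_right)

definition lin :: "(vec \<Rightarrow> vec) \<Rightarrow> bool" where
  "lin D \<longleftrightarrow> (\<forall>x\<in>V. \<forall>y\<in>V. D (x + y) = D x + D y) \<and> (\<forall>c. \<forall>x\<in>V. D (smul c x) = smul c (D x))
     \<and> (\<forall>x\<in>V. D x \<in> V)"

lemma lin_sum: assumes "lin D" "\<And>a. a \<in> A \<Longrightarrow> f a \<in> V" "finite A"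
  shows "D (sum f A) = (\<Sum>a\<in>A. D (f a))"
  using assms(3,2)
proof (induction A rule: finite_induct)
  case empty
  have "D 0 = D (smul 0 0)" by simp
  also have "\<dots> = 0" using assms(1) unfolding lin_def by (metis smul_zero2 zero_V)
  finally show ?case by (simp only: sum.empty)
next
  case (insert a A)
  then show ?case using assms(1) unfolding lin_def by simp
qed

lemma lin_rep: assumes "lin D" "x \<in> V" shows "D x = (\<Sum>b\<in>supp x. smul (x b) (D (bv b)))"
proof -
  have "D x = D (\<Sum>b\<in>supp x. smul (x b) (bv b))" using rep[OF assms(2)] by simp
  also have "\<dots> = (\<Sum>b\<in>supp x. D (smul (x b) (bv b)))"
    by (rule lin_sum) (use assms finite_supp in auto)
  also have "\<dots> = (\<Sum>b\<in>supp x. smul (x b) (D (bv b)))"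
    using assms(1) unfolding lin_def by simp
  finally show ?thesis .
qed

lemma lin_eq: assumes "lin D" "lin E" "\<And>b. D (bv b) = E (bv b)" "x \<in> V" shows "D x = E x"
  using lin_rep[OF assms(1,4)] lin_rep[OF assms(2,4)] assms(3) by simp

lemma lin_V: "lin D \<Longrightarrow> x \<in> V \<Longrightarrow> D x \<in> V" by (simp add: lin_def)

lemma brk_rep_left: "y \<in> V \<Longrightarrow> brk s la y z = (\<Sum>b\<in>supp y. smul (y b) (brk s la (bv b) z))"
  by (subst rep, assumption, subst brk_sum_left) (auto simp: brk_smul_left)
lemma brk_rep_right: "y \<in> V \<Longrightarrow> brk s la z y = (\<Sum>b\<in>supp y. smul (y b) (brk s la z (bv b)))"
  by (subst rep, assumption, subst brk_sum_right) (auto simp: brk_smul_right)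

lemma der_from_basis:
  assumes D: "lin D" and x: "x \<in> V" and y: "y \<in> V"
    and bas: "\<And>b1 b2. b1 \<in> supp x \<Longrightarrow> b2 \<in> supp y \<Longrightarrow>
       D (br s la b1 b2) = brk s la (D (bv b1)) (bv b2) + smul \<sigma> (brk s la (bv b1) (D (bv b2)))"
  shows "D (brk s la x y) = brk s la (D x) y + smul \<sigma> (brk s la x (D y))"
proof -
  have fx: "finite (supp x)" and fy: "finite (supp y)" using x y by (auto simp: finite_supp)
  have DV: "\<And>u. u \<in> V \<Longrightarrow> D u \<in> V" using D by (simp add: lin_def)
  have "D (brk s la x y) = D (\<Sum>b1\<in>supp x. \<Sum>b2\<in>supp y. smul (x b1 * y b2) (br s la b1 b2))"
    by (simp add: brk_expand)
  also have "\<dots> = (\<Sum>b1\<in>supp x. \<Sum>b2\<in>supp y. smul (x b1 * y b2) (D (br s la b1 b2)))"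
    using D fx fy by (simp add: lin_sum lin_def)
  finally have L: "D (brk s la x y) = \<dots>" .
  have R1: "brk s la (D x) y = (\<Sum>b1\<in>supp x. \<Sum>b2\<in>supp y. smul (x b1 * y b2) (brk s la (D (bv b1)) (bv b2)))"
    apply (subst lin_rep[OF D x])
    apply (subst brk_sum_left) apply (simp add: DV)
    apply (subst brk_rep_right[OF y])
    apply (simp add: brk_smul_left smul_sum mult.commute)
    done
  have R2: "brk s la x (D y) = (\<Sum>b1\<in>supp x. \<Sum>b2\<in>supp y. smul (x b1 * y b2) (brk s la (bv b1) (D (bv b2))))"
    apply (subst lin_rep[OF D y])
    apply (subst brk_sum_right) apply (simp add: DV)
    apply (subst brk_rep_left[OF x])
    apply (simp add: brk_smul_right brk_smul_left smul_sum sum.swap[of _ "supp x"] mult.commute)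
    done
  show ?thesis unfolding L R1 R2
    by (simp add: bas smul_add sum.distrib smul_sum mult.commute mult.left_commute)
qed



definition sg :: "bas \<Rightarrow> bas \<Rightarrow> complex" where "sg a b = (if par a \<and> par b then -1 else 1)"

lemma jacobi_basis:
  assumes ts: "(of_int (tws s)::complex) = 2 * of_real s"
  shows "brk s la (bv a) (br s la b c) = brk s la (br s la a b) (bv c) + smul (sg a b) (brk s la (bv b) (br s la a c))"
  apply (cases a; cases b; cases c)
  apply (simp_all add: brk_add_left brk_add_right brk_smul_left brk_smul_right sg_def)
  apply (simp_all add: fun_eq_iff pw bv_apply pv_def ts ac_simps)
  apply (auto simp: field_simps)
  done

lemma antisym_basis: "br s la a b = smul (- sg a b) (br s la b a)"
  apply (cases a; cases b)
  apply (simp_all add: sg_def fun_eq_iff pw bv_apply ac_simps)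
  done

fun dg :: "real \<Rightarrow> bas \<Rightarrow> int" where
  "dg s (L m) = 2 * m" | "dg s (I m) = 2 * m" | "dg s (G k) = 2 * k + tws s" | "dg s (H k) = 2 * k + tws s"

lemma br_deg: "br s la a b c \<noteq> 0 \<Longrightarrow> dg s c = dg s a + dg s b"
  by (cases a; cases b) (auto simp: pw bv_apply split: if_splits)

lemma br_par: "br s la a b c \<noteq> 0 \<Longrightarrow> par c = (par a \<noteq> par b)"
  by (cases a; cases b) (auto simp: pw bv_apply split: if_splits)

lemma hom_iff: "hom p x \<longleftrightarrow> x \<in> V \<and> (\<forall>b. x b \<noteq> 0 \<longrightarrow> par b = p)" by (simp add: hom_def)

lemma brk_nz: "brk s la x y c \<noteq> 0 \<Longrightarrow> \<exists>b1 b2. x b1 \<noteq> 0 \<and> y b2 \<noteq> 0 \<and> br s la b1 b2 c \<noteq> 0"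
  unfolding brk_def by (fastforce elim!: sum.not_neutral_contains_not_neutral)

lemma brk_hom: "hom p x \<Longrightarrow> hom q y \<Longrightarrow> hom (p \<noteq> q) (brk s la x y)"
  unfolding hom_iff by (auto dest!: brk_nz br_par)

definition dsupp :: "real \<Rightarrow> int \<Rightarrow> vec \<Rightarrow> bool" where
  "dsupp s d x \<longleftrightarrow> (\<forall>c. x c \<noteq> 0 \<longrightarrow> dg s c = d)"

lemma brk_deg: "dsupp s d1 x \<Longrightarrow> dsupp s d2 y \<Longrightarrow> dsupp s (d1 + d2) (brk s la x y)"
  unfolding dsupp_def by (auto dest!: brk_nz br_deg)

lemma hom_bv: "hom (par b) (bv b)" by (simp add: hom_iff bv_apply)
lemma hom_zero: "hom p 0" by (simp add: hom_iff pw)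
lemma hom_V: "hom p x \<Longrightarrow> x \<in> V" by (simp add: hom_iff)
lemma hom_add: assumes "hom p x" "hom p y" shows "hom p (x + y)"
  unfolding hom_iff
proof (intro conjI allI impI)
  show "x + y \<in> V" using assms by (simp add: hom_iff)
  fix b assume "(x + y) b \<noteq> 0" then have "x b \<noteq> 0 \<or> y b \<noteq> 0" by (auto simp: pw)
  then show "par b = p" using assms by (auto simp: hom_iff)
qed
lemma hom_smul: "hom p x \<Longrightarrow> hom p (smul c x)" by (auto simp: hom_iff pw)
lemma hom_diff: assumes "hom p x" "hom p y" shows "hom p (x - y)"
  unfolding hom_iff
proof (intro conjI allI impI)
  show "x - y \<in> V" using assms by (simp add: hom_iff)
  fix b assume "(x - y) b \<noteq> 0" then have "x b \<noteq> 0 \<or> y b \<noteq> 0" by (auto simp: pw)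
  then show "par b = p" using assms by (auto simp: hom_iff)
qed

lemma lin_brk: "lin (brk s la z)"
  unfolding lin_def by (simp add: brk_add_right brk_smul_right)

lemma ad_superder:
  assumes ts: "(of_int (tws s)::complex) = 2 * of_real s" and z: "hom a z"
  shows "superder s la a (brk s la z)"
  unfolding superder_def
proof (intro conjI allI impI ballI)
  show "\<And>x y. x \<in> V \<Longrightarrow> y \<in> V \<Longrightarrow> brk s la z (x + y) = brk s la z x + brk s la z y"
    by (simp add: brk_add_right)
  show "\<And>c x. brk s la z (smul c x) = smul c (brk s la z x)" by (simp add: brk_smul_right)
  show "\<And>p x. hom p x \<Longrightarrow> hom (a \<noteq> p) (brk s la z x)" using brk_hom z by blast
  fix p q x y assume hx: "hom p x" and hy: "hom q y"
  have zV: "z \<in> V" using z by (simp add: hom_iff)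
  show "brk s la z (brk s la x y) = brk s la (brk s la z x) y + smul (if a \<and> p then - 1 else 1) (brk s la x (brk s la z y))"
  proof (rule der_from_basis[OF lin_brk])
    show "x \<in> V" "y \<in> V" using hx hy by (auto simp: hom_iff)
    fix b1 b2 assume b1: "b1 \<in> supp x" and b2: "b2 \<in> supp y"
    have pb1: "par b1 = p" using hx b1 by (auto simp: hom_iff)
    have e1: "brk s la z (br s la b1 b2) = (\<Sum>b0\<in>supp z. smul (z b0) (brk s la (bv b0) (br s la b1 b2)))"
      by (rule brk_rep_left[OF zV])
    have e2: "brk s la (brk s la z (bv b1)) (bv b2) = (\<Sum>b0\<in>supp z. smul (z b0) (brk s la (br s la b0 b1) (bv b2)))"
      by (subst brk_rep_left[OF zV], subst brk_sum_left) (auto simp: brk_smul_left)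
    have e3: "brk s la (bv b1) (brk s la z (bv b2)) = (\<Sum>b0\<in>supp z. smul (z b0) (brk s la (bv b1) (br s la b0 b2)))"
      by (subst brk_rep_left[OF zV], subst brk_sum_right) (auto simp: brk_smul_right)
    define \<sigma> where "\<sigma> = (if a \<and> p then - 1 else (1::complex))"
    have sgeq: "\<And>b0. b0 \<in> supp z \<Longrightarrow> sg b0 b1 = \<sigma>"
      using z pb1 by (auto simp: hom_iff sg_def \<sigma>_def)
    have trm: "smul (z b0) (brk s la (bv b0) (br s la b1 b2)) = smul (z b0) (brk s la (br s la b0 b1) (bv b2)) + smul \<sigma> (smul (z b0) (brk s la (bv b1) (br s la b0 b2)))"
      if "b0 \<in> supp z" for b0
      unfolding jacobi_basis[OF ts, where a=b0 and b=b1 and c=b2] sgeq[OF that] smul_add smul_smul by (simp only: mult.commute)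
    have "(\<Sum>b0\<in>supp z. smul (z b0) (brk s la (bv b0) (br s la b1 b2))) = 
      (\<Sum>b0\<in>supp z. smul (z b0) (brk s la (br s la b0 b1) (bv b2))) + (\<Sum>b0\<in>supp z. smul \<sigma> (smul (z b0) (brk s la (bv b1) (br s la b0 b2))))"
      by (simp only: sum.distrib[symmetric] trm cong: sum.cong)
    then show "brk s la z (br s la b1 b2) = brk s la (brk s la z (bv b1)) (bv b2) + smul (if a \<and> p then - 1 else 1) (brk s la (bv b1) (brk s la z (bv b2)))"
      unfolding e1 e2 e3 \<sigma>_def[symmetric] by (simp only: smul_sum)
  qed
qed



lemma dG_add: "dG (x + y) = dG x + dG y" by (rule ext) (simp add: dG_def pw split: bas.split)
lemma dG_smul: "dG (smul c x) = smul c (dG x)" by (rule ext) (simp add: dG_def pw split: bas.split)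
lemma dG_zero[simp]: "dG 0 = 0" by (rule ext) (simp add: dG_def pw split: bas.split)
lemma dG_bv: "dG (bv b) = (case b of G k \<Rightarrow> bv (H k) | _ \<Rightarrow> 0)"
  by (rule ext) (auto simp: dG_def pw bv_apply split: bas.split)
lemma dD_add: "dD (x + y) = dD x + dD y" by (rule ext) (simp add: dD_def pw algebra_simps split: bas.split)
lemma dD_smul: "dD (smul c x) = smul c (dD x)" by (rule ext) (simp add: dD_def pw split: bas.split)
lemma dD_zero[simp]: "dD 0 = 0" by (rule ext) (simp add: dD_def pw split: bas.split)
fun wt :: "bas \<Rightarrow> complex" where "wt (L _) = 0" | "wt (I _) = 2" | "wt (G _) = 1" | "wt (H _) = 3"
lemma dD_bv: "dD (bv b) = smul (wt b) (bv b)"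
  by (rule ext) (auto simp: dD_def pw bv_apply split: bas.split)

lemma dG_V: "x \<in> V \<Longrightarrow> dG x \<in> V"
proof -
  assume x: "x \<in> V"
  let ?f = "\<lambda>b. case b of G k \<Rightarrow> H k | _ \<Rightarrow> b"
  have "supp (dG x) \<subseteq> ?f ` supp x"
  proof
    fix c assume "c \<in> supp (dG x)"
    then obtain k where "c = H k" "x (G k) \<noteq> 0" by (cases c) (auto simp: dG_def)
    then show "c \<in> ?f ` supp x" by (intro image_eqI[of _ _ "G k"]) simp_all
  qed
  moreover have "finite (?f ` supp x)" using x by (simp add: finite_supp)
  ultimately have "finite (supp (dG x))" by (rule finite_subset)
  then show ?thesis by (simp add: V_def)
qed

lemma dD_V: "x \<in> V \<Longrightarrow> dD x \<in> V"
proof -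
  assume x: "x \<in> V"
  have "\<And>b. dD x b \<noteq> 0 \<Longrightarrow> x b \<noteq> 0" subgoal for b by (cases b) (auto simp: dD_def) done
  then have "{b. dD x b \<noteq> 0} \<subseteq> {b. x b \<noteq> 0}" by blast
  then show ?thesis using x unfolding in_V by (rule finite_subset)
qed

lemma lin_dG: "lin dG" by (simp add: lin_def dG_add dG_smul dG_V)
lemma lin_dD: "lin dD" by (simp add: lin_def dD_add dD_smul dD_V)

definition ev :: "vec \<Rightarrow> vec" where "ev x = (\<lambda>b. if par b then 0 else x b)"
definition od :: "vec \<Rightarrow> vec" where "od x = (\<lambda>b. if par b then x b else 0)"
lemma ev_od: "x = ev x + od x" by (rule ext) (simp add: ev_def od_def pw)
lemma hom_ev: "x \<in> V \<Longrightarrow> hom False (ev x)"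
  unfolding hom_iff in_V ev_def by (auto elim: finite_subset[rotated])
lemma hom_od: "x \<in> V \<Longrightarrow> hom True (od x)"
  unfolding hom_iff in_V od_def by (auto elim: finite_subset[rotated])

lemma superder_lin: assumes "superder s la a D" shows "lin D"
  unfolding lin_def
proof (intro conjI ballI allI)
  show "\<And>x y. x \<in> V \<Longrightarrow> y \<in> V \<Longrightarrow> D (x + y) = D x + D y" "\<And>c x. x \<in> V \<Longrightarrow> D (smul c x) = smul c (D x)"
    using assms by (simp_all add: superder_def)
  fix x assume x: "x \<in> V"
  have h: "\<And>p x. hom p x \<Longrightarrow> hom (a \<noteq> p) (D x)" using assms by (simp add: superder_def)
  have "D x = D (ev x) + D (od x)" using ev_od[of x] assms hom_ev[OF x] hom_od[OF x]
    unfolding superder_def hom_iff by metis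
  moreover have "D (ev x) \<in> V" "D (od x) \<in> V" using h[OF hom_ev[OF x]] h[OF hom_od[OF x]] by (simp_all add: hom_iff)
  ultimately show "D x \<in> V" by simp
qed

lemma superder_basis: "superder s la a D \<Longrightarrow>
   D (br s la b1 b2) = brk s la (D (bv b1)) (bv b2) + smul (if a \<and> par b1 then -1 else 1) (brk s la (bv b1) (D (bv b2)))"
proof -
  assume "superder s la a D"
  then have "\<forall>p q x y. hom p x \<longrightarrow> hom q y \<longrightarrow>
        D (brk s la x y) = brk s la (D x) y + smul (if a \<and> p then -1 else 1) (brk s la x (D y))"
    by (simp add: superder_def)
  then have "D (brk s la (bv b1) (bv b2)) = brk s la (D (bv b1)) (bv b2) + smul (if a \<and> par b1 then -1 else 1) (brk s la (bv b1) (D (bv b2)))"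
    using hom_bv by blast
  then show ?thesis by simp
qed

lemma superder_of_basis:
  assumes "lin M" "\<And>p x. hom p x \<Longrightarrow> hom (a \<noteq> p) (M x)"
    "\<And>b1 b2. M (br s la b1 b2) = brk s la (M (bv b1)) (bv b2) + smul (if a \<and> par b1 then -1 else 1) (brk s la (bv b1) (M (bv b2)))"
  shows "superder s la a M"
  unfolding superder_def
proof (intro conjI allI impI ballI)
  show "\<And>x y. x \<in> V \<Longrightarrow> y \<in> V \<Longrightarrow> M (x + y) = M x + M y" "\<And>c x. x \<in> V \<Longrightarrow> M (smul c x) = smul c (M x)"
    using assms(1) by (auto simp: lin_def)
  show "\<And>p x. hom p x \<Longrightarrow> hom (a \<noteq> p) (M x)" by (rule assms(2))
  fix p q x y assume hx: "hom p x" and hy: "hom q y"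
  show "M (brk s la x y) = brk s la (M x) y + smul (if a \<and> p then -1 else 1) (brk s la x (M y))"
  proof (rule der_from_basis[OF assms(1)])
    show "x \<in> V" "y \<in> V" using hx hy by (auto simp: hom_iff)
    fix b1 b2 assume "b1 \<in> supp x" "b2 \<in> supp y"
    then have "par b1 = p" using hx by (auto simp: hom_iff)
    then show "M (br s la b1 b2) = brk s la (M (bv b1)) (bv b2) + smul (if a \<and> p then - 1 else 1) (brk s la (bv b1) (M (bv b2)))"
      using assms(3)[of b1 b2] by simp
  qed
qed

lemma dG_superder: "superder s la False dG"
proof (rule superder_of_basis[OF lin_dG])
  show "\<And>p x. hom p x \<Longrightarrow> hom (False \<noteq> p) (dG x)"
  proof -
    fix p x assume h: "hom p x"
    have "dG x \<in> V" using h by (simp add: hom_iff dG_V)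
    moreover have "\<forall>b. dG x b \<noteq> 0 \<longrightarrow> par b = p"
    proof (intro allI impI)
      fix b assume "dG x b \<noteq> 0" then show "par b = p" using h by (cases b) (auto simp: dG_def hom_iff)
    qed
    ultimately show "hom (False \<noteq> p) (dG x)" by (simp add: hom_iff)
  qed
  show "\<And>b1 b2. dG (br s la b1 b2) = brk s la (dG (bv b1)) (bv b2) + smul (if False \<and> par b1 then - 1 else 1) (brk s la (bv b1) (dG (bv b2)))"
    subgoal for b1 b2
      by (cases b1; cases b2) (simp_all add: dG_bv dG_add dG_smul)
    done
qed

lemma dD_superder: assumes "la = 0" shows "superder s la False dD"
proof (rule superder_of_basis[OF lin_dD])
  show "\<And>p x. hom p x \<Longrightarrow> hom (False \<noteq> p) (dD x)"
  proof -
    fix p x assume h: "hom p x"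
    have "dD x \<in> V" using h by (simp add: hom_iff dD_V)
    moreover have "\<forall>b. dD x b \<noteq> 0 \<longrightarrow> par b = p"
    proof (intro allI impI)
      fix b assume "dD x b \<noteq> 0" then show "par b = p" using h by (cases b) (auto simp: dD_def hom_iff)
    qed
    ultimately show "hom (False \<noteq> p) (dD x)" by (simp add: hom_iff)
  qed
  show "\<And>b1 b2. dD (br s la b1 b2) = brk s la (dD (bv b1)) (bv b2) + smul (if False \<and> par b1 then - 1 else 1) (brk s la (bv b1) (dD (bv b2)))"
    subgoal for b1 b2
      apply (cases b1; cases b2) 
      apply (simp_all add: dD_bv dD_add dD_smul assms brk_smul_left brk_smul_right)
      apply (simp_all add: fun_eq_iff pw bv_apply ac_simps)
      done
    done
qed

lemma superder_add: assumes D: "superder s la a D" and E: "superder s la a E"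
  shows "superder s la a (\<lambda>v. D v + E v)"
  unfolding superder_def
proof (intro conjI ballI allI impI)
  fix x y assume "x \<in> V" "y \<in> V"
  then show "D (x + y) + E (x + y) = D x + E x + (D y + E y)"
    using D E by (simp add: superder_def ac_simps)
next
  fix c x assume "x \<in> V"
  then show "D (smul c x) + E (smul c x) = smul c (D x + E x)"
    using D E by (simp add: superder_def smul_add)
next
  fix p x assume "hom p x"
  then show "hom (a \<noteq> p) (D x + E x)" using D E by (simp add: superder_def hom_add)
next
  fix p q x y assume hx: "hom p x" and hy: "hom q y"
  have V: "D x \<in> V" "E x \<in> V" "D y \<in> V" "E y \<in> V"
    using D E hx hy unfolding superder_def by (meson hom_V)+
  have "D (brk s la x y) = brk s la (D x) y + smul (if a \<and> p then -1 else 1) (brk s la x (D y))"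
    "E (brk s la x y) = brk s la (E x) y + smul (if a \<and> p then -1 else 1) (brk s la x (E y))"
    using D E hx hy unfolding superder_def by blast+
  then show "D (brk s la x y) + E (brk s la x y) =
       brk s la (D x + E x) y + smul (if a \<and> p then - 1 else 1) (brk s la x (D y + E y))"
    by (simp add: brk_add_left[OF V(1,2)] brk_add_right[OF V(3,4)] smul_add ac_simps)
qed

lemma superder_smul: assumes D: "superder s la a D" shows "superder s la a (\<lambda>v. smul c (D v))"
  unfolding superder_def
proof (intro conjI ballI allI impI)
  fix x y assume "x \<in> V" "y \<in> V"
  then show "smul c (D (x + y)) = smul c (D x) + smul c (D y)"
    using D by (simp add: superder_def smul_add)
next
  fix d x assume "x \<in> V"
  then show "smul c (D (smul d x)) = smul d (smul c (D x))"
    using D by (simp add: superder_def mult.commute)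
next
  fix p x assume "hom p x"
  then show "hom (a \<noteq> p) (smul c (D x))" using D by (simp add: superder_def hom_smul)
next
  fix p q x y assume hx: "hom p x" and hy: "hom q y"
  have "D (brk s la x y) = brk s la (D x) y + smul (if a \<and> p then -1 else 1) (brk s la x (D y))"
    using D hx hy unfolding superder_def by blast
  then show "smul c (D (brk s la x y)) =
       brk s la (smul c (D x)) y + smul (if a \<and> p then - 1 else 1) (brk s la x (smul c (D y)))"
    by (simp add: brk_smul_left brk_smul_right smul_add mult.commute)
qed

lemma superder_diff: "superder s la a D \<Longrightarrow> superder s la a E \<Longrightarrow> superder s la a (\<lambda>v. D v - E v)"
proof -
  assume "superder s la a D" "superder s la a E"
  then have "superder s la a (\<lambda>v. D v + smul (-1) (E v))" by (intro superder_add superder_smul)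
  moreover have "(\<lambda>v. D v + smul (-1) (E v)) = (\<lambda>v. D v - E v)" by (rule ext, rule ext) (simp add: pw)
  ultimately show ?thesis by simp
qed



lemma tws_cases: "s = 0 \<or> s = 1/2 \<Longrightarrow> (s = 0 \<and> tws s = 0) \<or> (s = 1/2 \<and> tws s = 1)"
  by (elim disjE; hypsubst; simp add: tws_def)

lemma ts: "s = 0 \<or> s = 1/2 \<Longrightarrow> (of_int (tws s)::complex) = 2 * of_real s"
  by (elim disjE; hypsubst; simp add: tws_def)

lemma pv2: "s = 0 \<or> s = 1/2 \<Longrightarrow> 2 * pv s k = of_int (2 * k + tws s)"
  by (elim disjE; hypsubst; simp add: tws_def pv_def)

lemma brk_bv_at:
  assumes w: "w \<in> V" and S: "finite S" and z: "\<And>b. b \<notin> S \<Longrightarrow> br s la a b c = 0"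
  shows "brk s la (bv a) w c = (\<Sum>b\<in>S. w b * br s la a b c)"
proof -
  have "brk s la (bv a) w c = (\<Sum>b1\<in>{a}. \<Sum>b2\<in>supp w \<union> S. bv a b1 * w b2 * br s la b1 b2 c)"
    by (rule brk_eq) (use w S finite_supp in \<open>auto simp: bv_apply split: if_splits\<close>)
  also have "\<dots> = (\<Sum>b2\<in>supp w \<union> S. w b2 * br s la a b2 c)" by (simp add: bv_apply)
  also have "\<dots> = (\<Sum>b\<in>S. w b * br s la a b c)"
    by (rule sum.mono_neutral_right) (use w S finite_supp z in auto)
  finally show ?thesis .
qed

lemma LL: "w \<in> V \<Longrightarrow> brk s la (bv (L m)) w (L j) = of_int (2*m - j) * w (L (j - m))"
  apply (subst brk_bv_at[where S="{L (j - m)}"], assumption, simp)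
  subgoal for b by (cases b) (auto simp: pw bv_apply)
  apply (simp add: pw bv_apply)
  done

lemma LI: "w \<in> V \<Longrightarrow> brk s la (bv (L m)) w (I j) = of_int (2*m - j) * w (I (j - m))"
  apply (subst brk_bv_at[where S="{I (j - m)}"], assumption, simp)
  subgoal for b by (cases b) (auto simp: pw bv_apply)
  apply (simp add: pw bv_apply)
  done

lemma LG: "w \<in> V \<Longrightarrow> brk s la (bv (L m)) w (G j) = (of_int m / 2 - pv s (j - m)) * w (G (j - m))"
  apply (subst brk_bv_at[where S="{G (j - m)}"], assumption, simp)
  subgoal for b by (cases b) (auto simp: pw bv_apply)
  apply (simp add: pw bv_apply)
  done

lemma LH: "w \<in> V \<Longrightarrow> brk s la (bv (L m)) w (H j) =
   (of_int m / 2 - pv s (j - m)) * w (H (j - m)) + la * (of_int m + 1) * w (G (j - m))"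
  apply (subst brk_bv_at[where S="{G (j - m), H (j - m)}"], assumption, simp)
  subgoal for b by (cases b) (auto simp: pw bv_apply)
  apply (simp add: pw bv_apply)
  done

lemma brk_swapL: "brk s la w (bv (L m)) = smul (-1) (brk s la (bv (L m)) w)"
proof (cases "w \<in> V")
  case True
  have "brk s la w (bv (L m)) = (\<Sum>b\<in>supp w. smul (w b) (br s la b (L m)))"
    by (simp add: brk_rep_left[OF True])
  also have "\<dots> = (\<Sum>b\<in>supp w. smul (-1) (smul (w b) (br s la (L m) b)))"
    by (rule sum.cong[OF refl]) (subst antisym_basis, simp add: sg_def mult.commute)
  also have "\<dots> = smul (-1) (brk s la (bv (L m)) w)"
    by (simp add: brk_rep_right[OF True] smul_sum)
  finally show ?thesis .
qed (simp add: brk_inf1 brk_inf2)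

lemma smul_cancel: "c \<noteq> 0 \<Longrightarrow> smul c u = smul c v \<Longrightarrow> u = v"
  by (rule ext) (drule fun_cong, simp add: pw)
lemma smul_cancel0: "c \<noteq> 0 \<Longrightarrow> smul c u = 0 \<Longrightarrow> u = 0"
  by (rule ext) (drule fun_cong, simp add: pw)

lemma dsuppD: "dsupp s d w \<Longrightarrow> dg s c \<noteq> d \<Longrightarrow> w c = 0" by (auto simp: dsupp_def)

lemma eigen:
  assumes sc: "s = 0 \<or> s = 1/2" and w: "w \<in> V"
    and h: "\<And>c. dg s c \<noteq> d \<Longrightarrow> brk s la (bv (L 0)) w c = - (of_int d / 2) * w c"
  shows "dsupp s d w"
  unfolding dsupp_def
proof (intro allI impI, rule ccontr)
  fix c assume nz: "w c \<noteq> 0" and ne: "dg s c \<noteq> d"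
  have G0: "w (G k) = 0" if "2 * k + tws s \<noteq> d" for k
  proof -
    have "brk s la (bv (L 0)) w (G k) = - (of_int d / 2) * w (G k)" using h[of "G k"] that by simp
    then have "pv s k * w (G k) = of_int d / 2 * w (G k)" using LG[OF w, of s la 0 k] by simp
    then have "(of_int d / 2 - pv s k) * w (G k) = 0" by (metis left_diff_distrib right_minus_eq)
    moreover have "of_int d / 2 - pv s k \<noteq> 0"
    proof
      assume "of_int d / 2 - pv s k = 0"
      then have "(of_int d :: complex) = 2 * pv s k" by (simp add: field_simps)
      then have "(of_int d :: complex) = of_int (2 * k + tws s)" using pv2[OF sc] by simp
      then show False using that by (simp only: of_int_eq_iff)
    qed
    ultimately show ?thesis by simp
  qed
  show False
  proof (cases c)
    case (L j)
    have "brk s la (bv (L 0)) w (L j) = - (of_int d / 2) * w (L j)" using h ne L by simp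
    then have "of_int j * w (L j) = of_int d / 2 * w (L j)" using LL[OF w, of s la 0 j] by simp
    then have "(of_int d / 2 - of_int j) * w (L j) = (0::complex)" by (metis left_diff_distrib right_minus_eq)
    moreover have "of_int d / 2 - of_int j \<noteq> (0::complex)"
    proof
      assume "of_int d / 2 - of_int j = (0::complex)"
      then have "(of_int d :: complex) = of_int (2 * j)" by (simp add: field_simps)
      then show False using ne L by (simp only: of_int_eq_iff) simp
    qed
    ultimately show False using nz L by simp
  next
    case (I j)
    have "brk s la (bv (L 0)) w (I j) = - (of_int d / 2) * w (I j)" using h ne I by simp
    then have "of_int j * w (I j) = of_int d / 2 * w (I j)" using LI[OF w, of s la 0 j] by simp
    then have "(of_int d / 2 - of_int j) * w (I j) = (0::complex)" by (metis left_diff_distrib right_minus_eq)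
    moreover have "of_int d / 2 - of_int j \<noteq> (0::complex)"
    proof
      assume "of_int d / 2 - of_int j = (0::complex)"
      then have "(of_int d :: complex) = of_int (2 * j)" by (simp add: field_simps)
      then show False using ne I by (simp only: of_int_eq_iff) simp
    qed
    ultimately show False using nz I by simp
  next
    case (G k)
    then show False using G0[of k] ne nz by simp
  next
    case (H k)
    have g: "w (G k) = 0" using G0[of k] ne H by simp
    have "brk s la (bv (L 0)) w (H k) = - (of_int d / 2) * w (H k)" using h ne H by simp
    then have "pv s k * w (H k) = of_int d / 2 * w (H k)" using LH[OF w, of s la 0 k] g by simp
    then have "(of_int d / 2 - pv s k) * w (H k) = 0" by (metis left_diff_distrib right_minus_eq)
    moreover have "of_int d / 2 - pv s k \<noteq> 0"
    proof
      assume "of_int d / 2 - pv s k = 0"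
      then have "(of_int d :: complex) = 2 * pv s k" by (simp add: field_simps)
      then have "(of_int d :: complex) = of_int (2 * k + tws s)" using pv2[OF sc] by simp
      then show False using ne H by (simp only: of_int_eq_iff) simp
    qed
    ultimately show False using nz H by simp
  qed
qed



lemma pv_nz: "s = 0 \<or> s = 1/2 \<Longrightarrow> pv s k = 0 \<longleftrightarrow> 2 * k + tws s = 0"
proof -
  assume sc: "s = 0 \<or> s = 1/2"
  have "pv s k = 0 \<longleftrightarrow> 2 * pv s k = 0" by simp
  also have "\<dots> \<longleftrightarrow> (of_int (2 * k + tws s) :: complex) = of_int 0" using pv2[OF sc] by simp
  also have "\<dots> \<longleftrightarrow> 2 * k + tws s = 0" by (simp only: of_int_eq_iff)
  finally show ?thesis .
qed

lemma half_pv: "s = 0 \<or> s = 1/2 \<Longrightarrow> of_int m / 2 - pv s k = 0 \<longleftrightarrow> m = 2 * k + tws s"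
proof -
  assume sc: "s = 0 \<or> s = 1/2"
  have "of_int m / 2 - pv s k = 0 \<longleftrightarrow> (of_int m::complex) = 2 * pv s k" by (auto simp: field_simps)
  also have "\<dots> \<longleftrightarrow> (of_int m :: complex) = of_int (2 * k + tws s)" using pv2[OF sc] by simp
  also have "\<dots> \<longleftrightarrow> m = 2 * k + tws s" by (simp only: of_int_eq_iff)
  finally show ?thesis .
qed

lemma inj_L:
  assumes sc: "s = 0 \<or> s = 1/2" and w: "w \<in> V" and ds: "dsupp s d w" and m1: "2 * m \<noteq> d" and m2: "m \<noteq> d"
    and z: "brk s la (bv (L m)) w = 0"
  shows "w = 0"
proof -
  have G0: "w (G k) = 0" for k
  proof (rule ccontr)
    assume nz: "w (G k) \<noteq> 0"
    then have d: "d = 2 * k + tws s" using ds by (auto simp: dsupp_def)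
    have "brk s la (bv (L m)) w (G (k + m)) = 0" using z by (simp add: zero_fun_apply)
    then have "(of_int m / 2 - pv s k) * w (G k) = 0" using LG[OF w, of s la m "k + m"] by simp
    then show False using nz half_pv[OF sc, of m k] d m2 by simp
  qed
  show ?thesis
  proof (rule ext)
    fix c show "w c = 0 c"
    proof (cases c)
      case (L j)
      have "brk s la (bv (L m)) w (L (j + m)) = 0" using z by (simp add: zero_fun_apply)
      then have "of_int (m - j) * w (L j) = (0::complex)" using LL[OF w, of s la m "j + m"] by simp
      moreover have "w (L j) \<noteq> 0 \<Longrightarrow> m \<noteq> j" using ds m1 by (auto simp: dsupp_def)
      ultimately show ?thesis using L by (auto simp: zero_fun_apply)
    next
      case (I j)
      have "brk s la (bv (L m)) w (I (j + m)) = 0" using z by (simp add: zero_fun_apply)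
      then have "of_int (m - j) * w (I j) = (0::complex)" using LI[OF w, of s la m "j + m"] by simp
      moreover have "w (I j) \<noteq> 0 \<Longrightarrow> m \<noteq> j" using ds m1 by (auto simp: dsupp_def)
      ultimately show ?thesis using I by (auto simp: zero_fun_apply)
    next
      case (G k) then show ?thesis using G0 by (simp add: zero_fun_apply)
    next
      case (H k)
      have "brk s la (bv (L m)) w (H (k + m)) = 0" using z by (simp add: zero_fun_apply)
      then have "(of_int m / 2 - pv s k) * w (H k) = 0" using LH[OF w, of s la m "k + m"] G0[of k] by simp
      moreover have "w (H k) \<noteq> 0 \<Longrightarrow> m \<noteq> 2 * k + tws s" using ds m2 by (auto simp: dsupp_def)
      ultimately show ?thesis using H half_pv[OF sc, of m k] by (auto simp: zero_fun_apply)
    qed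
  qed
qed

lemma rep_LI: assumes "hom False w" "dsupp s (2 * n) w"
  shows "w = smul (w (L n)) (bv (L n)) + smul (w (I n)) (bv (I n))"
proof (rule ext)
  fix c show "w c = (smul (w (L n)) (bv (L n)) + smul (w (I n)) (bv (I n))) c"
    using assms by (cases c) (auto simp: pw bv_apply hom_iff dsupp_def)
qed

lemma rep_GH: assumes "hom True w" "dsupp s (2 * k + tws s) w"
  shows "w = smul (w (G k)) (bv (G k)) + smul (w (H k)) (bv (H k))"
proof (rule ext)
  fix c show "w c = (smul (w (G k)) (bv (G k)) + smul (w (H k)) (bv (H k))) c"
    using assms by (cases c) (auto simp: pw bv_apply hom_iff dsupp_def)
qed

lemma zero_odd: assumes "hom True w" "dsupp s (2 * n) w" "tws s = 1" shows "w = 0"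
proof (rule ext)
  fix c show "w c = 0 c"
  proof (cases c)
    case (G k)
    have "2 * k + 1 \<noteq> 2 * n" by presburger
    then show ?thesis using assms G by (auto simp: zero_fun_apply dsupp_def)
  next
    case (H k)
    have "2 * k + 1 \<noteq> 2 * n" by presburger
    then show ?thesis using assms H by (auto simp: zero_fun_apply dsupp_def)
  qed (use assms in \<open>auto simp: zero_fun_apply hom_iff\<close>)
qed

lemma zero_even: assumes "hom False w" "dsupp s (2 * k + 1) w" shows "w = 0"
proof (rule ext)
  fix c show "w c = 0 c"
  proof (cases c)
    case (L n)
    have "2 * k + 1 \<noteq> 2 * n" by presburger
    then show ?thesis using assms L by (auto simp: zero_fun_apply dsupp_def)
  next
    case (I n)
    have "2 * k + 1 \<noteq> 2 * n" by presburger
    then show ?thesis using assms I by (auto simp: zero_fun_apply dsupp_def)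
  qed (use assms in \<open>auto simp: zero_fun_apply hom_iff\<close>)
qed

lemma superder_hom: "superder s la a D \<Longrightarrow> hom p x \<Longrightarrow> hom (a \<noteq> p) (D x)"
  by (simp add: superder_def)

lemma stepA:
  assumes sc: "s = 0 \<or> s = 1/2" and D: "superder s la a D"
  shows "\<exists>x. hom a x \<and> dsupp s 0 (D (bv (L 0)) - brk s la x (bv (L 0)))"
proof -
  define y where "y = D (bv (L 0))"
  have hy: "hom a y" using superder_hom[OF D hom_bv[of "L 0"]] by (simp add: y_def)
  have yV: "y \<in> V" using hy by (simp add: hom_iff)
  define x where "x = (\<lambda>b. case b of L n \<Rightarrow> (if n = 0 then 0 else y (L n) / of_int n)
     | I n \<Rightarrow> (if n = 0 then 0 else y (I n) / of_int n)
     | G k \<Rightarrow> (if pv s k = 0 then 0 else y (G k) / pv s k)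
     | H k \<Rightarrow> (if pv s k = 0 then 0 else (y (H k) + la * (y (G k) / pv s k)) / pv s k))"
  let ?f = "\<lambda>b. case b of G k \<Rightarrow> H k | _ \<Rightarrow> b"
  have sx: "x b \<noteq> 0 \<Longrightarrow> y b \<noteq> 0 \<or> (\<exists>k. b = H k \<and> y (G k) \<noteq> 0)" for b
    by (cases b) (auto simp: x_def split: if_splits)
  have "supp x \<subseteq> supp y \<union> ?f ` supp y"
  proof
    fix b assume "b \<in> supp x"
    then have "y b \<noteq> 0 \<or> (\<exists>k. b = H k \<and> y (G k) \<noteq> 0)" using sx by simp
    then show "b \<in> supp y \<union> ?f ` supp y"
    proof
      assume "\<exists>k. b = H k \<and> y (G k) \<noteq> 0"
      then obtain k where "b = H k" "y (G k) \<noteq> 0" by blast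
      then show ?thesis by (intro UnI2 image_eqI[of _ _ "G k"]) simp_all
    qed simp
  qed
  moreover have "finite (supp y \<union> ?f ` supp y)" using yV by (simp add: finite_supp)
  ultimately have xV: "x \<in> V" unfolding V_def by (auto intro: finite_subset)
  have hx: "hom a x"
    unfolding hom_iff
  proof (intro conjI allI impI)
    show "x \<in> V" by (rule xV)
    fix b assume "x b \<noteq> 0"
    then have "y b \<noteq> 0 \<or> (\<exists>k. b = H k \<and> y (G k) \<noteq> 0)" using sx by simp
    then show "par b = a" using hy unfolding hom_iff by force
  qed
  have key: "brk s la x (bv (L 0)) c = y c" if "dg s c \<noteq> 0" for c
  proof -
    have "brk s la x (bv (L 0)) c = - brk s la (bv (L 0)) x c" by (simp add: brk_swapL pw)
    also have "\<dots> = y c"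
    proof (cases c)
      case (L j)
      then have "j \<noteq> 0" using that by simp
      then show ?thesis using L by (simp add: LL[OF xV], simp add: x_def)
    next
      case (I j)
      then have "j \<noteq> 0" using that by simp
      then show ?thesis using I by (simp add: LI[OF xV], simp add: x_def)
    next
      case (G k)
      then have "pv s k \<noteq> 0" using that pv_nz[OF sc] by simp
      then show ?thesis using G by (simp add: LG[OF xV], simp add: x_def)
    next
      case (H k)
      then have "pv s k \<noteq> 0" using that pv_nz[OF sc] by simp
      then show ?thesis using H by (simp add: LH[OF xV], simp add: x_def field_simps)
    qed
    finally show ?thesis .
  qed
  have "dsupp s 0 (D (bv (L 0)) - brk s la x (bv (L 0)))"
    unfolding dsupp_def y_def[symmetric] using key by (force simp: pw)
  then show ?thesis using hx by blast
qed



lemma lin_smulD: "lin E \<Longrightarrow> x \<in> V \<Longrightarrow> E (smul c x) = smul c (E x)" by (simp add: lin_def)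
lemma lin_addD: "lin E \<Longrightarrow> x \<in> V \<Longrightarrow> y \<in> V \<Longrightarrow> E (x + y) = E x + E y" by (simp add: lin_def)

lemma stepB:
  assumes sc: "s = 0 \<or> s = 1/2" and E: "superder s la a E" and z0: "dsupp s 0 (E (bv (L 0)))"
  shows "dsupp s (dg s e) (E (bv e))"
proof -
  have lE: "lin E" using superder_lin[OF E] .
  define z where "z = E (bv (L 0))"
  have gen: "dsupp s (dg s e) (E (bv e))"
    if br: "E (br s la e (L 0)) = smul (of_int (dg s e) / 2) (E (bv e)) + r" and r: "dsupp s (dg s e) r" for e r
  proof -
    define w where "w = E (bv e)"
    have wV: "w \<in> V" using lin_V[OF lE bv_V] by (simp add: w_def)
    have rel: "E (br s la e (L 0)) = brk s la w (bv (L 0)) + smul (if a \<and> par e then -1 else 1) (brk s la (bv e) z)"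
      using superder_basis[OF E, of e "L 0"] by (simp add: w_def z_def)
    have bd: "dsupp s (dg s e + 0) (brk s la (bv e) z)"
      by (rule brk_deg) (use z0 in \<open>auto simp: dsupp_def z_def bv_apply\<close>)
    show ?thesis unfolding w_def[symmetric]
    proof (rule eigen[OF sc wV])
      fix c assume c: "dg s c \<noteq> dg s e"
      have "(smul (of_int (dg s e) / 2) w + r) c = (brk s la w (bv (L 0)) + smul (if a \<and> par e then -1 else 1) (brk s la (bv e) z)) c"
        using br rel by (simp add: w_def)
      moreover have "r c = 0" by (rule dsuppD[OF r c])
      moreover have "brk s la (bv e) z c = 0" by (rule dsuppD[OF bd]) (use c in simp)
      ultimately have "of_int (dg s e) / 2 * w c = brk s la w (bv (L 0)) c" by (simp add: pw)
      then show "brk s la (bv (L 0)) w c = - (of_int (dg s e) / 2) * w c"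
        by (simp add: brk_swapL pw)
    qed
  qed
  have nonG: "dsupp s (dg s e) (E (bv e))" if "br s la e (L 0) = smul (of_int (dg s e) / 2) (bv e)" for e
    by (rule gen[where r=0]) (simp_all add: that lin_smulD[OF lE] dsupp_def zero_fun_apply)
  have Hk: "dsupp s (dg s (H k)) (E (bv (H k)))" for k
  proof (rule nonG)
    have pe: "pv s k = of_int (dg s (H k)) / 2" using pv2[OF sc, of k] by (simp add: field_simps)
    show "br s la (H k) (L 0) = smul (of_int (dg s (H k)) / 2) (bv (H k))" by (simp add: pe)
  qed
  show ?thesis
  proof (cases e)
    case (L n)
    have "br s la (L n) (L 0) = smul (of_int (dg s (L n)) / 2) (bv (L n))" by simp
    then show ?thesis using nonG L by blast
  next
    case (I n)
    have "br s la (I n) (L 0) = smul (of_int (dg s (I n)) / 2) (bv (I n))" by simp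
    then show ?thesis using nonG I by blast
  next
    case (H k) then show ?thesis using Hk[of k] by simp
  next
    case (G k)
    have pe: "pv s k = of_int (dg s (G k)) / 2" using pv2[OF sc, of k] by (simp add: field_simps)
    have "E (br s la (G k) (L 0)) = E (smul (pv s k) (bv (G k)) + smul (- la) (bv (H k)))" by simp
    also have "\<dots> = smul (of_int (dg s (G k)) / 2) (E (bv (G k))) + smul (- la) (E (bv (H k)))"
      by (simp add: lin_addD[OF lE] lin_smulD[OF lE] pe)
    finally have "dsupp s (dg s (G k)) (E (bv (G k)))"
      by (rule gen) (use Hk[of k] in \<open>auto simp: dsupp_def pw\<close>)
    then show ?thesis using G by simp
  qed
qed

definition degpres :: "real \<Rightarrow> (vec \<Rightarrow> vec) \<Rightarrow> bool" where
  "degpres s E \<longleftrightarrow> (\<forall>e. dsupp s (dg s e) (E (bv e)))"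

lemma superder_LL: "superder s la a E \<Longrightarrow>
   E (smul (of_int (m - n)) (bv (L (m + n)))) = brk s la (E (bv (L m))) (bv (L n)) + brk s la (bv (L m)) (E (bv (L n)))"
  using superder_basis[of s la a E "L m" "L n"] by simp

lemma Lrel:
  assumes sc: "s = 0 \<or> s = 1/2" and E: "superder s la a E" and dp: "degpres s E"
    and e1: "E (bv (L m)) = 0" and e2: "E (bv (L (m + n))) = 0" and c1: "2 * m \<noteq> 2 * n" and c2: "m \<noteq> 2 * n"
  shows "E (bv (L n)) = 0"
proof -
  have lE: "lin E" using superder_lin[OF E] .
  have "brk s la (bv (L m)) (E (bv (L n))) = 0"
    using superder_LL[OF E, of m n] e1 e2 by (simp add: lin_smulD[OF lE])
  then show ?thesis
    by (rule inj_L[OF sc lin_V[OF lE bv_V] _ c1 c2, rotated]) (use dp[unfolded degpres_def, rule_format, of "L n"] in simp)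
qed

lemma Lkill:
  assumes sc: "s = 0 \<or> s = 1/2" and E: "superder s la a E" and dp: "degpres s E"
    and e0: "E (bv (L 0)) = 0" and e1: "E (bv (L 1)) = 0"
  shows "E (bv (L n)) = 0"
proof -
  have em1: "E (bv (L (-1))) = 0" by (rule Lrel[OF sc E dp e1, of "-1"]) (simp_all add: e0)
  have up: "E (bv (L (int k))) = 0" for k
  proof (induction k)
    case 0 then show ?case using e0 by simp
  next
    case (Suc k)
    show ?case by (rule Lrel[OF sc E dp em1, of "int (Suc k)"]) (use Suc in simp_all)
  qed
  have down: "E (bv (L (- int k))) = 0" for k
  proof (induction k)
    case 0 then show ?case using e0 by simp
  next
    case (Suc k)
    show ?case by (rule Lrel[OF sc E dp e1, of "- int (Suc k)"]) (use Suc in simp_all)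
  qed
  show ?thesis
  proof (cases "n \<ge> 0")
    case True then show ?thesis using up[of "nat n"] by simp
  next
    case False then show ?thesis using down[of "nat (- n)"] by simp
  qed
qed



lemmas cmp = brk_add_left brk_add_right brk_smul_left brk_smul_right
lemmas ev = pw bv_apply

lemma lin_zero: "lin (\<lambda>v. 0)" by (simp add: lin_def)

lemma degpresD: "degpres s E \<Longrightarrow> dsupp s (dg s e) (E (bv e))" by (simp add: degpres_def)

lemma stepC_odd_half:
  assumes t1: "tws s = 1" and E: "superder s la True E" and dp: "degpres s E"
  shows "\<forall>v\<in>V. E v = 0"
proof -
  have "E (bv b) = 0" for b
  proof (cases b)
    case (L n)
    have "hom True (E (bv (L n)))" using superder_hom[OF E hom_bv[of "L n"]] by simp
    then show ?thesis using zero_odd[OF _ _ t1, of "E (bv (L n))" n] degpresD[OF dp, of "L n"] L by simp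
  next
    case (I n)
    have "hom True (E (bv (I n)))" using superder_hom[OF E hom_bv[of "I n"]] by simp
    then show ?thesis using zero_odd[OF _ _ t1, of "E (bv (I n))" n] degpresD[OF dp, of "I n"] I by simp
  next
    case (G k)
    have "hom False (E (bv (G k)))" using superder_hom[OF E hom_bv[of "G k"]] by simp
    then show ?thesis using zero_even[of "E (bv (G k))" s k] degpresD[OF dp, of "G k"] G t1 by simp
  next
    case (H k)
    have "hom False (E (bv (H k)))" using superder_hom[OF E hom_bv[of "H k"]] by simp
    then show ?thesis using zero_even[of "E (bv (H k))" s k] degpresD[OF dp, of "H k"] H t1 by simp
  qed
  then show ?thesis using lin_eq[OF superder_lin[OF E] lin_zero] by blast
qed

lemma superder_Lb: "superder s la a E \<Longrightarrow>
   E (br s la (L m) b) = brk s la (E (bv (L m))) (bv b) + brk s la (bv (L m)) (E (bv b))"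
  using superder_basis[of s la a E "L m" b] by simp

lemma degpres_diff:
  assumes dp: "degpres s E" and x0: "dsupp s 0 x0"
  shows "degpres s (\<lambda>v. E v - brk s la x0 v)"
  unfolding degpres_def dsupp_def
proof (intro allI impI)
  fix e c assume "(E (bv e) - brk s la x0 (bv e)) c \<noteq> 0"
  then have "E (bv e) c \<noteq> 0 \<or> brk s la x0 (bv e) c \<noteq> 0" by (auto simp: pw)
  moreover have "dsupp s (0 + dg s e) (brk s la x0 (bv e))"
    by (rule brk_deg[OF x0]) (auto simp: dsupp_def bv_apply)
  ultimately show "dg s c = dg s e" using degpresD[OF dp, of e] by (auto simp: dsupp_def)
qed



lemma pv0[simp]: "pv 0 k = of_int k" by (simp add: pv_def)
lemma tws0[simp]: "tws 0 = 0" by (simp add: tws_def)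

lemma smul_solve: "c \<noteq> 0 \<Longrightarrow> smul c u = v \<Longrightarrow> u = smul (inverse c) v"
  by (rule ext, drule fun_cong, simp add: pw field_simps)

lemma stepC_odd0:
  assumes E: "superder 0 la True E" and dp: "degpres 0 E"
  shows "\<exists>x0. hom True x0 \<and> (\<forall>v\<in>V. E v = brk 0 la x0 v)"
proof -
  have sc: "(0::real) = 0 \<or> (0::real) = 1/2" by simp
  have lE: "lin E" using superder_lin[OF E] .
  have hE: "\<And>b. hom (\<not> par b) (E (bv b))" using superder_hom[OF E hom_bv] by simp
  have "E (bv (L 0)) = smul (E (bv (L 0)) (G 0)) (bv (G 0)) + smul (E (bv (L 0)) (H 0)) (bv (H 0))"
    using rep_GH[where w="E (bv (L 0))" and s=0 and k=0] hE[of "L 0"] degpresD[OF dp, of "L 0"] by simp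
  then obtain z0 z1 where zr: "E (bv (L 0)) = smul z0 (bv (G 0)) + smul z1 (bv (H 0))" by blast
  have "E (bv (L 1)) = smul (E (bv (L 1)) (G 1)) (bv (G 1)) + smul (E (bv (L 1)) (H 1)) (bv (H 1))"
    using rep_GH[where w="E (bv (L 1))" and s=0 and k=1] hE[of "L 1"] degpresD[OF dp, of "L 1"] by simp
  then obtain \<alpha> \<beta> where w1r: "E (bv (L 1)) = smul \<alpha> (bv (G 1)) + smul \<beta> (bv (H 1))" by blast
  have rel: "E (bv (L 1)) = brk 0 la (E (bv (L 1))) (bv (L 0)) + brk 0 la (bv (L 1)) (E (bv (L 0)))"
    using superder_Lb[OF E, of 1 "L 0"] by simp
  note rel2 = rel[unfolded w1r zr]
  have z0: "z0 = 0" using fun_cong[OF rel2, of "G 1"] by (simp add: cmp ev)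
  have z1: "z1 = 2 * la * \<alpha>" using fun_cong[OF rel2, of "H 1"] z0 by (simp add: cmp ev field_simps)
  define x0 where "x0 = smul (-2 * \<alpha>) (bv (G 0)) + smul (8 * la * \<alpha> - 2 * \<beta>) (bv (H 0))"
  have hx0: "hom True x0" unfolding x0_def by (intro hom_add hom_smul) (simp_all add: hom_bv[of "G 0", simplified] hom_bv[of "H 0", simplified])
  have dx0: "dsupp 0 0 x0" by (auto simp: x0_def dsupp_def ev split: if_splits)
  define E' where "E' = (\<lambda>v. E v - brk 0 la x0 v)"
  have E': "superder 0 la True E'" unfolding E'_def by (rule superder_diff[OF E ad_superder[OF ts[OF sc] hx0]])
  have lE': "lin E'" using superder_lin[OF E'] .
  have dp': "degpres 0 E'" unfolding E'_def by (rule degpres_diff[OF dp dx0])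
  have e0: "E' (bv (L 0)) = 0"
    unfolding E'_def zr z0 z1 x0_def by (simp add: cmp fun_eq_iff ev)
  have e1: "E' (bv (L 1)) = 0"
    unfolding E'_def w1r x0_def by (simp add: cmp fun_eq_iff ev field_simps)
  have eL: "\<And>n. E' (bv (L n)) = 0" by (rule Lkill[OF sc E' dp' e0 e1])
  have hE': "\<And>b. hom (\<not> par b) (E' (bv b))" using superder_hom[OF E' hom_bv] by simp
  have Lb: "\<And>m b. E' (br 0 la (L m) b) = brk 0 la (bv (L m)) (E' (bv b))"
    using superder_Lb[OF E'] eL by simp
  have "E' (bv (I 0)) = smul (E' (bv (I 0)) (G 0)) (bv (G 0)) + smul (E' (bv (I 0)) (H 0)) (bv (H 0))"
    using rep_GH[where w="E' (bv (I 0))" and s=0 and k=0] hE'[of "I 0"] degpresD[OF dp', of "I 0"] by simp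
  then obtain \<gamma> \<delta> where i0: "E' (bv (I 0)) = smul \<gamma> (bv (G 0)) + smul \<delta> (bv (H 0))" by blast
  have i1: "E' (bv (I 1)) = brk 0 la (bv (L 1)) (E' (bv (I 0)))" using Lb[of 1 "I 0"] by simp
  have i2: "smul (-2) (E' (bv (I 0))) = brk 0 la (bv (L (-1))) (E' (bv (I 1)))"
    using Lb[of "-1" "I 1"] by (simp add: lin_smulD[OF lE'])
  note i3 = i2[unfolded i1, unfolded i0]
  have g: "\<gamma> = 0" using fun_cong[OF i3, of "G 0"] by (simp add: cmp ev field_simps)
  have d: "\<delta> = 0" using fun_cong[OF i3, of "H 0"] g by (simp add: cmp ev field_simps)
  have eI0: "E' (bv (I 0)) = 0" using i0 g d by simp
  have eI: "E' (bv (I m)) = 0" for m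
  proof (cases "m = 0")
    case True then show ?thesis using eI0 by simp
  next
    case False
    have "smul (of_int m) (E' (bv (I m))) = 0" using Lb[of m "I 0"] eI0 by (simp add: lin_smulD[OF lE'])
    from smul_cancel0[OF _ this] show ?thesis using False by simp
  qed
  have "E' (bv (H 0)) = smul (E' (bv (H 0)) (L 0)) (bv (L 0)) + smul (E' (bv (H 0)) (I 0)) (bv (I 0))"
    using rep_LI[where w="E' (bv (H 0))" and s=0 and n=0] hE'[of "H 0"] degpresD[OF dp', of "H 0"] by simp
  then obtain \<eta> \<theta> where h0: "E' (bv (H 0)) = smul \<eta> (bv (L 0)) + smul \<theta> (bv (I 0))" by blast
  have h1: "smul (1/2) (E' (bv (H 1))) = brk 0 la (bv (L 1)) (E' (bv (H 0)))"
    using Lb[of 1 "H 0"] by (simp add: lin_smulD[OF lE'])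
  then have h1': "E' (bv (H 1)) = smul 2 (brk 0 la (bv (L 1)) (E' (bv (H 0))))"
    by (drule_tac smul_solve[rotated]) simp_all
  have h2: "smul (-3/2) (E' (bv (H 0))) = brk 0 la (bv (L (-1))) (E' (bv (H 1)))"
    using Lb[of "-1" "H 1"] by (simp add: lin_smulD[OF lE'])
  note h3 = h2[unfolded h1', unfolded h0]
  have et: "\<eta> = 0" using fun_cong[OF h3, of "L 0"] by (simp add: cmp ev field_simps)
  have th: "\<theta> = 0" using fun_cong[OF h3, of "I 0"] by (simp add: cmp ev field_simps)
  have eH0: "E' (bv (H 0)) = 0" using h0 et th by simp
  have eH: "E' (bv (H m)) = 0" for m
  proof (cases "m = 0")
    case True then show ?thesis using eH0 by simp
  next
    case False
    have "smul (of_int m / 2) (E' (bv (H m))) = 0" using Lb[of m "H 0"] eH0 by (simp add: lin_smulD[OF lE'])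
    from smul_cancel0[OF _ this] show ?thesis using False by simp
  qed
  have "E' (bv (G 0)) = smul (E' (bv (G 0)) (L 0)) (bv (L 0)) + smul (E' (bv (G 0)) (I 0)) (bv (I 0))"
    using rep_LI[where w="E' (bv (G 0))" and s=0 and n=0] hE'[of "G 0"] degpresD[OF dp', of "G 0"] by simp
  then obtain \<epsilon> \<zeta> where g0: "E' (bv (G 0)) = smul \<epsilon> (bv (L 0)) + smul \<zeta> (bv (I 0))" by blast
  have g1: "smul (1/2) (E' (bv (G 1))) = brk 0 la (bv (L 1)) (E' (bv (G 0)))"
    using Lb[of 1 "G 0"] eH by (simp add: lin_smulD[OF lE'] lin_addD[OF lE'])
  then have g1': "E' (bv (G 1)) = smul 2 (brk 0 la (bv (L 1)) (E' (bv (G 0))))"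
    by (drule_tac smul_solve[rotated]) simp_all
  have g2: "smul (-3/2) (E' (bv (G 0))) = brk 0 la (bv (L (-1))) (E' (bv (G 1)))"
    using Lb[of "-1" "G 1"] eH by (simp add: lin_smulD[OF lE'] lin_addD[OF lE'])
  note g3 = g2[unfolded g1', unfolded g0]
  have ep: "\<epsilon> = 0" using fun_cong[OF g3, of "L 0"] by (simp add: cmp ev field_simps)
  have ze: "\<zeta> = 0" using fun_cong[OF g3, of "I 0"] by (simp add: cmp ev field_simps)
  have eG0: "E' (bv (G 0)) = 0" using g0 ep ze by simp
  have eG: "E' (bv (G m)) = 0" for m
  proof (cases "m = 0")
    case True then show ?thesis using eG0 by simp
  next
    case False
    have "smul (of_int m / 2) (E' (bv (G m))) = 0" using Lb[of m "G 0"] eG0 eH by (simp add: lin_smulD[OF lE'] lin_addD[OF lE'])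
    from smul_cancel0[OF _ this] show ?thesis using False by simp
  qed
  have "E' (bv b) = 0" for b by (cases b) (simp_all add: eL eI eG eH)
  then have "\<forall>v\<in>V. E' v = 0" using lin_eq[OF lE' lin_zero] by blast
  then have "\<forall>v\<in>V. E v = brk 0 la x0 v" by (simp add: E'_def)
  then show ?thesis using hx0 by blast
qed



lemma lin_out: "lin (\<lambda>v. smul a (dG v) + smul b (dD v))"
  unfolding lin_def by (simp add: dG_add dD_add dG_smul dD_smul smul_add dG_V dD_V ac_simps mult.commute)

lemma stepC_even:
  assumes sc: "s = 0 \<or> s = 1/2" and E: "superder s la False E" and dp: "degpres s E"
  shows "\<exists>x0 \<alpha> \<beta>. hom False x0 \<and> (la \<noteq> 0 \<longrightarrow> \<beta> = 0) \<and> (\<forall>v\<in>V. E v = brk s la x0 v + smul \<alpha> (dG v) + smul \<beta> (dD v))"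
proof -
  have lE: "lin E" using superder_lin[OF E] .
  have hE: "\<And>b. hom (par b) (E (bv b))" using superder_hom[OF E hom_bv] by simp
  have "E (bv (L 0)) = smul (E (bv (L 0)) (L 0)) (bv (L 0)) + smul (E (bv (L 0)) (I 0)) (bv (I 0))"
    using rep_LI[where w="E (bv (L 0))" and s=s and n=0] hE[of "L 0"] degpresD[OF dp, of "L 0"] by simp
  then obtain z0 z1 where zr: "E (bv (L 0)) = smul z0 (bv (L 0)) + smul z1 (bv (I 0))" by blast
  have "E (bv (L 1)) = smul (E (bv (L 1)) (L 1)) (bv (L 1)) + smul (E (bv (L 1)) (I 1)) (bv (I 1))"
    using rep_LI[where w="E (bv (L 1))" and s=s and n=1] hE[of "L 1"] degpresD[OF dp, of "L 1"] by simp
  then obtain \<alpha> \<beta> where w1r: "E (bv (L 1)) = smul \<alpha> (bv (L 1)) + smul \<beta> (bv (I 1))" by blast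
  have rel: "E (bv (L 1)) = brk s la (E (bv (L 1))) (bv (L 0)) + brk s la (bv (L 1)) (E (bv (L 0)))"
    using superder_Lb[OF E, of 1 "L 0"] by simp
  note rel2 = rel[unfolded w1r zr]
  have z0: "z0 = 0" using fun_cong[OF rel2, of "L 1"] by (simp add: cmp ev)
  have z1: "z1 = 0" using fun_cong[OF rel2, of "I 1"] by (simp add: cmp ev)
  define x0 where "x0 = smul (- \<alpha>) (bv (L 0)) + smul (- \<beta>) (bv (I 0))"
  have hx0: "hom False x0" unfolding x0_def by (intro hom_add hom_smul) (simp_all add: hom_bv[of "L 0", simplified] hom_bv[of "I 0", simplified])
  have dx0: "dsupp s 0 x0" by (auto simp: x0_def dsupp_def ev split: if_splits)
  define E' where "E' = (\<lambda>v. E v - brk s la x0 v)"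
  have E': "superder s la False E'" unfolding E'_def by (rule superder_diff[OF E ad_superder[OF ts[OF sc] hx0]])
  have lE': "lin E'" using superder_lin[OF E'] .
  have dp': "degpres s E'" unfolding E'_def by (rule degpres_diff[OF dp dx0])
  have e0: "E' (bv (L 0)) = 0"
    unfolding E'_def zr z0 z1 x0_def by (simp add: cmp fun_eq_iff ev)
  have e1: "E' (bv (L 1)) = 0"
    unfolding E'_def w1r x0_def by (simp add: cmp fun_eq_iff ev)
  have eL: "\<And>n. E' (bv (L n)) = 0" by (rule Lkill[OF sc E' dp' e0 e1])
  have hE': "\<And>b. hom (par b) (E' (bv b))" using superder_hom[OF E' hom_bv] by simp
  have Lb: "\<And>m b. E' (br s la (L m) b) = brk s la (bv (L m)) (E' (bv b))"
    using superder_Lb[OF E'] eL by simp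
  have bas: "\<And>b1 b2. E' (br s la b1 b2) = brk s la (E' (bv b1)) (bv b2) + brk s la (bv b1) (E' (bv b2))"
    using superder_basis[OF E'] by simp
  have E'0: "E' 0 = 0" using lin_smulD[OF lE' zero_V, of 0] by simp
  have "E' (bv (I 0)) = smul (E' (bv (I 0)) (L 0)) (bv (L 0)) + smul (E' (bv (I 0)) (I 0)) (bv (I 0))"
    using rep_LI[where w="E' (bv (I 0))" and s=s and n=0] hE'[of "I 0"] degpresD[OF dp', of "I 0"] by simp
  then obtain \<gamma> \<delta> where i0: "E' (bv (I 0)) = smul \<gamma> (bv (L 0)) + smul \<delta> (bv (I 0))" by blast
  have iM: "E' (bv (I m)) = smul \<gamma> (bv (L m)) + smul \<delta> (bv (I m))" for m
  proof (cases "m = 0")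
    case True then show ?thesis using i0 by simp
  next
    case False
    have "smul (of_int m) (E' (bv (I m))) = brk s la (bv (L m)) (E' (bv (I 0)))"
      using Lb[of m "I 0"] by (simp add: lin_smulD[OF lE'])
    also have "\<dots> = smul (of_int m) (smul \<gamma> (bv (L m)) + smul \<delta> (bv (I m)))"
      unfolding i0 by (simp add: cmp fun_eq_iff ev)
    finally have "smul (of_int m) (E' (bv (I m))) = smul (of_int m) (smul \<gamma> (bv (L m)) + smul \<delta> (bv (I m)))" .
    from smul_cancel[OF _ this] show ?thesis using False by simp
  qed
  have "E' (br s la (I 1) (I 0)) = brk s la (E' (bv (I 1))) (bv (I 0)) + brk s la (bv (I 1)) (E' (bv (I 0)))"
    by (rule bas)
  then have "0 = brk s la (E' (bv (I 1))) (bv (I 0)) + brk s la (bv (I 1)) (E' (bv (I 0)))"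
    by (simp add: E'0)
  note g1 = this[unfolded iM]
  have g: "\<gamma> = 0" using fun_cong[OF g1, of "I 1"] by (simp add: cmp ev zero_fun_apply)
  have eI: "E' (bv (I m)) = smul \<delta> (bv (I m))" for m using iM[of m] g by simp
  define \<theta> where "\<theta> k = E' (bv (H k)) (H k)" for k
  have eH: "E' (bv (H k)) = smul (\<theta> k) (bv (H k))" for k
  proof -
    have "E' (bv (H k)) = smul (E' (bv (H k)) (G k)) (bv (G k)) + smul (E' (bv (H k)) (H k)) (bv (H k))"
      using rep_GH[where w="E' (bv (H k))" and s=s and k=k] hE'[of "H k"] degpresD[OF dp', of "H k"] by simp
    then obtain \<eta> \<theta>' where r: "E' (bv (H k)) = smul \<eta> (bv (G k)) + smul \<theta>' (bv (H k))" by blast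
    have t': "\<theta>' = \<theta> k" unfolding \<theta>_def r by (simp add: ev)
    define m where "m = 2 * k + tws s + 1"
    have c: "of_int m - 2 * pv s k = 1" using pv2[OF sc, of k] by (simp add: m_def)
    have "E' (br s la (I m) (H k)) = brk s la (E' (bv (I m))) (bv (H k)) + brk s la (bv (I m)) (E' (bv (H k)))"
      by (rule bas)
    then have "0 = brk s la (E' (bv (I m))) (bv (H k)) + brk s la (bv (I m)) (E' (bv (H k)))"
      by (simp add: E'0)
    note h = this[unfolded eI, unfolded r]
    have "\<eta> = 0" using fun_cong[OF h, of "H (m + k)"] c by (simp add: cmp ev zero_fun_apply)
    then show ?thesis using r t' by simp
  qed
  define \<epsilon> where "\<epsilon> k = E' (bv (G k)) (G k)" for k
  define \<zeta> where "\<zeta> k = E' (bv (G k)) (H k)" for k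
  have eG: "E' (bv (G k)) = smul (\<epsilon> k) (bv (G k)) + smul (\<zeta> k) (bv (H k))" for k
    using rep_GH[where w="E' (bv (G k))" and s=s and k=k] hE'[of "G k"] degpresD[OF dp', of "G k"]
    by (simp add: \<epsilon>_def \<zeta>_def)
  have epsk: "\<delta> = 2 * \<epsilon> k" for k
  proof -
    have "E' (br s la (G k) (G k)) = brk s la (E' (bv (G k))) (bv (G k)) + brk s la (bv (G k)) (E' (bv (G k)))"
      by (rule bas)
    note q = this[unfolded eG]
    show ?thesis using fun_cong[OF q, of "I (k + k + tws s)"] by (simp add: eI cmp ev)
  qed
  have IG: "(of_int m - 2 * pv s k) * \<theta> (m + k) = (of_int m - 2 * pv s k) * (\<delta> + \<epsilon> k)" for m k
  proof -
    have "E' (br s la (I m) (G k)) = brk s la (E' (bv (I m))) (bv (G k)) + brk s la (bv (I m)) (E' (bv (G k)))"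
      by (rule bas)
    note q = this[unfolded eI eG]
    show ?thesis using fun_cong[OF q, of "H (m + k)"] by (simp add: lin_smulD[OF lE'] eH cmp ev algebra_simps)
  qed
  have th: "\<theta> j = 3 * \<epsilon> 0" for j
  proof (cases "pv s j = 0")
    case False
    have "(of_int 0 - 2 * pv s j) * \<theta> (0 + j) = (of_int 0 - 2 * pv s j) * (\<delta> + \<epsilon> j)" by (rule IG)
    then have "\<theta> j = \<delta> + \<epsilon> j" using False by simp
    then show ?thesis using epsk[of j] epsk[of 0] by simp
  next
    case True
    have c3: "of_int 1 - 2 * pv s (j - 1) = 3" using True by (simp add: pv_def algebra_simps)
    have "3 * \<theta> (1 + (j - 1)) = 3 * (\<delta> + \<epsilon> (j - 1))" using IG[of 1 "j - 1"] unfolding c3 .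
    then have "\<theta> j = \<delta> + \<epsilon> (j - 1)" by (simp del: distrib_left_numeral)
    then show ?thesis using epsk[of "j - 1"] epsk[of 0] by simp
  qed
  have LG: "(of_int m / 2 - pv s k) * \<zeta> (m + k) + la * (of_int m + 1) * \<theta> (m + k) =
      \<epsilon> k * (la * (of_int m + 1)) + \<zeta> k * (of_int m / 2 - pv s k)" for m k
  proof -
    note q = Lb[of m "G k", unfolded eG]
    show ?thesis using fun_cong[OF q, of "H (m + k)"] by (simp add: lin_smulD[OF lE'] lin_addD[OF lE'] eH eG cmp ev)
  qed
  have laeps: "la * \<epsilon> 0 = 0"
    using LG[of 0 0] th[of 0] by (simp add: algebra_simps)
  have epsc: "\<epsilon> k = \<epsilon> 0" for k using epsk[of k] epsk[of 0] by simp
  have zstep: "\<zeta> (m + k) = \<zeta> k" if "m \<noteq> 2 * k + tws s" for m k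
  proof -
    have ne: "of_int m / 2 - pv s k \<noteq> 0" using half_pv[OF sc, of m k] that by simp
    have "(of_int m / 2 - pv s k) * \<zeta> (m + k) = \<zeta> k * (of_int m / 2 - pv s k)"
    proof -
      have "la * \<theta> (m + k) = la * \<epsilon> k" using th[of "m + k"] epsc[of k] laeps by (cases "la = 0") simp_all
      then show ?thesis using LG[of m k] by (cases "la = 0") (simp_all add: field_simps)
    qed
    then show ?thesis using ne by simp
  qed
  have zc: "\<zeta> j = \<zeta> 5" for j
  proof (cases "j - 5 = 2 * 5 + tws s")
    case False then show ?thesis using zstep[of "j - 5" 5] by simp
  next
    case True
    have "\<zeta> ((j - 6) + 6) = \<zeta> 6" by (rule zstep) (use True in simp)
    moreover have "\<zeta> (1 + 5) = \<zeta> 5" by (rule zstep) (use tws_cases[OF sc] in auto)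
    ultimately show ?thesis by simp
  qed
  have fin: "E' (bv b) = smul (\<zeta> 5) (dG (bv b)) + smul (\<epsilon> 0) (dD (bv b))" for b
  proof (cases b)
    case (L n) then show ?thesis by (simp add: eL dG_bv dD_bv)
  next
    case (I n) then show ?thesis using epsk[of 0] by (simp add: eI dG_bv dD_bv mult.commute)
  next
    case (G k) then show ?thesis using epsc[of k] zc[of k] by (simp add: eG dG_bv dD_bv smul_add ac_simps)
  next
    case (H k) then show ?thesis using th[of k] by (simp add: eH dG_bv dD_bv mult.commute)
  qed
  have "\<forall>v\<in>V. E' v = smul (\<zeta> 5) (dG v) + smul (\<epsilon> 0) (dD v)"
    using lin_eq[OF lE' lin_out fin] by blast
  then have "\<forall>v\<in>V. E v = brk s la x0 v + smul (\<zeta> 5) (dG v) + smul (\<epsilon> 0) (dD v)"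
    by (auto simp: E'_def algebra_simps)
  moreover have "la \<noteq> 0 \<longrightarrow> \<epsilon> 0 = 0" using laeps by auto
  ultimately show ?thesis using hx0 by blast
qed



lemma classify:
  assumes sc: "s = 0 \<or> s = 1/2" and D: "superder s la a D"
  shows "\<exists>x\<in>V. \<exists>\<alpha> \<beta>. (la \<noteq> 0 \<longrightarrow> \<beta> = 0) \<and> (a \<longrightarrow> \<alpha> = 0 \<and> \<beta> = 0) \<and>
           (\<forall>v\<in>V. D v = brk s la x v + smul \<alpha> (dG v) + smul \<beta> (dD v))"
proof -
  obtain x where hx: "hom a x" and dz: "dsupp s 0 (D (bv (L 0)) - brk s la x (bv (L 0)))"
    using stepA[OF sc D] by blast
  have xV: "x \<in> V" using hx by (simp add: hom_iff)
  define D1 where "D1 = (\<lambda>v. D v - brk s la x v)"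
  have D1: "superder s la a D1" unfolding D1_def by (rule superder_diff[OF D ad_superder[OF ts[OF sc] hx]])
  have dp: "degpres s D1" unfolding degpres_def
    by (intro allI stepB[OF sc D1]) (use dz in \<open>simp add: D1_def\<close>)
  have bk: "D v = D1 v + brk s la x v" for v by (simp add: D1_def)
  show ?thesis
  proof (cases a)
    case False
    obtain x0 \<alpha> \<beta> where hx0: "hom False x0" and lb: "la \<noteq> 0 \<longrightarrow> \<beta> = 0"
      and eq: "\<forall>v\<in>V. D1 v = brk s la x0 v + smul \<alpha> (dG v) + smul \<beta> (dD v)"
    proof -
      have "superder s la False D1" using D1 False by simp
      from stepC_even[OF sc this dp] show ?thesis using that by blast
    qed
    have x0V: "x0 \<in> V" using hx0 by (simp add: hom_iff)
    have "\<forall>v\<in>V. D v = brk s la (x0 + x) v + smul \<alpha> (dG v) + smul \<beta> (dD v)"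
      using eq by (simp add: bk brk_add_left[OF x0V xV] ac_simps)
    then show ?thesis using lb False x0V xV by (intro bexI[of _ "x0 + x"]) auto
  next
    case True
    have "\<exists>x0\<in>V. \<forall>v\<in>V. D1 v = brk s la x0 v"
    proof (cases "s = 0")
      case True
      have "superder 0 la True D1" "degpres 0 D1" using D1 dp \<open>a\<close> True by simp_all
      from stepC_odd0[OF this] obtain x0 where "hom True x0" "\<forall>v\<in>V. D1 v = brk 0 la x0 v" by blast
      then show ?thesis using True by (auto simp: hom_iff)
    next
      case False
      then have "tws s = 1" using tws_cases[OF sc] by auto
      from stepC_odd_half[OF this] D1 dp \<open>a\<close> have "\<forall>v\<in>V. D1 v = 0" by simp
      then show ?thesis by (intro bexI[of _ 0]) simp_all
    qed
    then obtain x0 where x0V: "x0 \<in> V" and eq: "\<forall>v\<in>V. D1 v = brk s la x0 v" by blast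
    have "\<forall>v\<in>V. D v = brk s la (x0 + x) v + smul 0 (dG v) + smul 0 (dD v)"
      using eq by (simp add: bk brk_add_left[OF x0V xV])
    then show ?thesis using True x0V xV by (intro bexI[of _ "x0 + x"]) auto
  qed
qed

lemma centerless:
  assumes sc: "s = 0 \<or> s = 1/2" and xV: "x \<in> V" and z: "\<And>m. brk s la x (bv (L m)) = 0"
  shows "x = 0"
proof -
  have z': "brk s la (bv (L m)) x c = 0" for m c
    using fun_cong[OF z[of m], of c] by (simp add: brk_swapL pw)
  have G0: "x (G k) = 0" for k
  proof -
    define m where "m = 2 * k + tws s + 1"
    have "(of_int m / 2 - pv s k) * x (G k) = 0" using z'[of m "G (k + m)"] LG[OF xV, of s la m "k + m"] by simp
    moreover have "of_int m / 2 - pv s k \<noteq> 0" using half_pv[OF sc, of m k] by (simp add: m_def)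
    ultimately show ?thesis by simp
  qed
  show ?thesis
  proof (rule ext)
    fix c show "x c = 0 c"
    proof (cases c)
      case (L j)
      have "of_int (2 * (j + 1) - (j + (j + 1))) * x (L j) = (0::complex)"
        using z'[of "j + 1" "L (j + (j + 1))"] LL[OF xV, of s la "j + 1" "j + (j + 1)"] by simp
      then show ?thesis using L by (simp add: zero_fun_apply)
    next
      case (I j)
      have "of_int (2 * (j + 1) - (j + (j + 1))) * x (I j) = (0::complex)"
        using z'[of "j + 1" "I (j + (j + 1))"] LI[OF xV, of s la "j + 1" "j + (j + 1)"] by simp
      then show ?thesis using I by (simp add: zero_fun_apply)
    next
      case (G k) then show ?thesis using G0 by (simp add: zero_fun_apply)
    next
      case (H k)
      define m where "m = 2 * k + tws s + 1"
      have "(of_int m / 2 - pv s k) * x (H k) = 0"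
        using z'[of m "H (k + m)"] LH[OF xV, of s la m "k + m"] G0[of k] by simp
      moreover have "of_int m / 2 - pv s k \<noteq> 0" using half_pv[OF sc, of m k] by (simp add: m_def)
      ultimately show ?thesis using H by (simp add: zero_fun_apply)
    qed
  qed
qed

theorem theorem2p1:
  fixes s :: real and la :: complex
  assumes "s = 0 \<or> s = 1/2"
  shows "(\<forall>D. is_der s la D \<longleftrightarrow>
            (\<exists>x\<in>V. \<exists>a b. (la \<noteq> 0 \<longrightarrow> b = 0) \<and>
               (\<forall>v\<in>V. D v = ad s la x v + smul a (dG v) + smul b (dD v))))
       \<and> (\<forall>x\<in>V. \<forall>a b. (la \<noteq> 0 \<longrightarrow> b = 0) \<and>
               (\<forall>v\<in>V. ad s la x v + smul a (dG v) + smul b (dD v) = 0)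
             \<longrightarrow> (\<forall>v\<in>V. ad s la x v = 0) \<and> a = 0 \<and> b = 0)"
proof -
  have sc: "s = 0 \<or> s = 1/2" by (rule assms)
  have part1: "\<forall>D. is_der s la D \<longleftrightarrow>
            (\<exists>x\<in>V. \<exists>a b. (la \<noteq> 0 \<longrightarrow> b = 0) \<and>
               (\<forall>v\<in>V. D v = ad s la x v + smul a (dG v) + smul b (dD v)))"
  proof (intro allI iffI)
    fix D assume "is_der s la D"
    then obtain D0 D1 where D0: "superder s la False D0" and D1: "superder s la True D1"
      and sum: "\<forall>v\<in>V. D v = D0 v + D1 v" unfolding is_der_def by blast
    obtain x0 \<alpha> \<beta> where x0V: "x0 \<in> V" and lb: "la \<noteq> 0 \<longrightarrow> \<beta> = 0"
      and e0: "\<forall>v\<in>V. D0 v = brk s la x0 v + smul \<alpha> (dG v) + smul \<beta> (dD v)"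
      using classify[OF sc D0] by blast
    obtain x1 \<alpha>1 \<beta>1 where x1V: "x1 \<in> V" and z1: "\<alpha>1 = 0 \<and> \<beta>1 = 0"
      and e1: "\<forall>v\<in>V. D1 v = brk s la x1 v + smul \<alpha>1 (dG v) + smul \<beta>1 (dD v)"
      using classify[OF sc D1] by blast
    have "\<forall>v\<in>V. D v = ad s la (x0 + x1) v + smul \<alpha> (dG v) + smul \<beta> (dD v)"
      using sum e0 e1 z1 by (simp add: ad_def brk_add_left[OF x0V x1V] ac_simps)
    then show "\<exists>x\<in>V. \<exists>a b. (la \<noteq> 0 \<longrightarrow> b = 0) \<and> (\<forall>v\<in>V. D v = ad s la x v + smul a (dG v) + smul b (dD v))"
      using lb x0V x1V by (intro bexI[of _ "x0 + x1"]) auto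
  next
    fix D assume "\<exists>x\<in>V. \<exists>a b. (la \<noteq> 0 \<longrightarrow> b = 0) \<and> (\<forall>v\<in>V. D v = ad s la x v + smul a (dG v) + smul b (dD v))"
    then obtain x a b where xV: "x \<in> V" and lb: "la \<noteq> 0 \<longrightarrow> b = 0"
      and eq: "\<forall>v\<in>V. D v = ad s la x v + smul a (dG v) + smul b (dD v)" by blast
    have sD: "superder s la False (\<lambda>v. smul b (dD v))"
    proof (cases "la = 0")
      case True then show ?thesis by (intro superder_smul dD_superder)
    next
      case False
      then have "b = 0" using lb by simp
      moreover have "(\<lambda>v. smul 0 (dD v)) = (\<lambda>v. smul 0 (dG v))" by simp
      ultimately show ?thesis using superder_smul[OF dG_superder, of s la 0] by simp
    qed
    have S0: "superder s la False (\<lambda>v. brk s la (ev x) v + smul a (dG v) + smul b (dD v))"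
      by (intro superder_add[OF superder_add[OF ad_superder[OF ts[OF sc] hom_ev[OF xV]] superder_smul[OF dG_superder]] sD])
    have S1: "superder s la True (brk s la (od x))"
      by (rule ad_superder[OF ts[OF sc] hom_od[OF xV]])
    have evV: "ev x \<in> V" and odV: "od x \<in> V" using hom_ev[OF xV] hom_od[OF xV] by (simp_all add: hom_iff)
    have "\<forall>v\<in>V. D v = (brk s la (ev x) v + smul a (dG v) + smul b (dD v)) + brk s la (od x) v"
    proof
      fix v assume "v \<in> V"
      have "brk s la x v = brk s la (ev x) v + brk s la (od x) v"
        using brk_add_left[OF evV odV, of s la v] ev_od[of x] by simp
      then show "D v = (brk s la (ev x) v + smul a (dG v) + smul b (dD v)) + brk s la (od x) v"
        using eq \<open>v \<in> V\<close> by (simp add: ad_def ac_simps)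
    qed
    then show "is_der s la D" unfolding is_der_def using S0 S1 by blast
  qed
  have part2: "\<forall>x\<in>V. \<forall>a b. (la \<noteq> 0 \<longrightarrow> b = 0) \<and>
               (\<forall>v\<in>V. ad s la x v + smul a (dG v) + smul b (dD v) = 0)
             \<longrightarrow> (\<forall>v\<in>V. ad s la x v = 0) \<and> a = 0 \<and> b = 0"
  proof (intro ballI allI impI)
    fix x a b assume xV: "x \<in> V"
      and h: "(la \<noteq> 0 \<longrightarrow> b = 0) \<and> (\<forall>v\<in>V. ad s la x v + smul a (dG v) + smul b (dD v) = 0)"
    have "brk s la x (bv (L m)) = 0" for m
      using h[THEN conjunct2, rule_format, OF bv_V[of "L m"]] by (simp add: ad_def dG_bv dD_bv)
    then have x0: "x = 0" by (rule centerless[OF sc xV])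
    have "ad s la x (bv (G 0)) + smul a (dG (bv (G 0))) + smul b (dD (bv (G 0))) = 0" using h by simp
    then have q: "smul a (bv (H 0)) + smul b (bv (G 0)) = 0" using x0 by (simp add: ad_def dG_bv dD_bv)
    have "a = 0" using fun_cong[OF q, of "H 0"] by (simp add: ev zero_fun_apply)
    moreover have "b = 0" using fun_cong[OF q, of "G 0"] by (simp add: ev zero_fun_apply)
    moreover have "\<forall>v\<in>V. ad s la x v = 0" using x0 by (simp add: ad_def)
    ultimately show "(\<forall>v\<in>V. ad s la x v = 0) \<and> a = 0 \<and> b = 0" by simp
  qed
  show ?thesis using part1 part2 by blast
qed


end
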